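(* Let $\Gamma$ be a finitely generated group with exactly $2$ ends, and let $S$ be any finite generating set of $\Gamma$ not containing the identity. Then the Cayley graph $G=\mathrm{Cay}(\Gamma,S)$ has a periodic proper vertex-coloring with $\chi(G)$ colors.
   Context: The Cayley graph $\mathrm{Cay}(\Gamma,S)$ has vertex set $\Gamma$, with $g,h$ adjacent iff $hg^{-1}\in S\cup S^{-1}$. The number of ends of a finitely generated group is the number of ends of any of its Cayley graphs with respect to finite generating sets (ends: equivalence classes of rays, two rays being equivalent if there are infinitely many disjoint paths between them). $\chi(G)$ is the chromatic number. A vertex-coloring of $G$ is periodic if the subgroup of automorphisms of $G$ mapping every vertex to a vertex of the same color has finitely many orbits on $V(G)$. *)

theory Defs
  imports "HOL-Algebra.Algebra"
begin

definition is_path :: "'a set \<Rightarrow> ('a \<Rightarrow> 'a \<Rightarrow> bool) \<Rightarrow> 'a list \<Rightarrow> bool" where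
  "is_path V E p \<longleftrightarrow> p \<noteq> [] \<and> set p \<subseteq> V \<and> distinct p \<and>
     (\<forall>i. Suc i < length p \<longrightarrow> E (p ! i) (p ! Suc i))"

definition is_ray :: "'a set \<Rightarrow> ('a \<Rightarrow> 'a \<Rightarrow> bool) \<Rightarrow> (nat \<Rightarrow> 'a) \<Rightarrow> bool" where
  "is_ray V E r \<longleftrightarrow> inj r \<and> range r \<subseteq> V \<and> (\<forall>i. E (r i) (r (Suc i)))"

definition rays_equiv :: "'a set \<Rightarrow> ('a \<Rightarrow> 'a \<Rightarrow> bool) \<Rightarrow> (nat \<Rightarrow> 'a) \<Rightarrow> (nat \<Rightarrow> 'a) \<Rightarrow> bool" where
  "rays_equiv V E r1 r2 \<longleftrightarrow> (\<exists>P. infinite P \<and>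
     (\<forall>p\<in>P. is_path V E p \<and> hd p \<in> range r1 \<and> last p \<in> range r2) \<and>
     (\<forall>p\<in>P. \<forall>q\<in>P. p \<noteq> q \<longrightarrow> set p \<inter> set q = {}))"

definition graph_ends :: "'a set \<Rightarrow> ('a \<Rightarrow> 'a \<Rightarrow> bool) \<Rightarrow> (nat \<Rightarrow> 'a) set set" where
  "graph_ends V E = {{r'. is_ray V E r' \<and> rays_equiv V E r r'} | r. is_ray V E r}"

definition has_num_ends :: "'a set \<Rightarrow> ('a \<Rightarrow> 'a \<Rightarrow> bool) \<Rightarrow> nat \<Rightarrow> bool" where
  "has_num_ends V E k \<longleftrightarrow> finite (graph_ends V E) \<and> card (graph_ends V E) = k"

definition proper_coloring :: "'a set \<Rightarrow> ('a \<Rightarrow> 'a \<Rightarrow> bool) \<Rightarrow> ('a \<Rightarrow> nat) \<Rightarrow> bool" where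
  "proper_coloring V E c \<longleftrightarrow> (\<forall>u\<in>V. \<forall>v\<in>V. E u v \<longrightarrow> c u \<noteq> c v)"

definition chromatic_number :: "'a set \<Rightarrow> ('a \<Rightarrow> 'a \<Rightarrow> bool) \<Rightarrow> nat" where
  "chromatic_number V E = (LEAST k. \<exists>c. proper_coloring V E c \<and> c ` V \<subseteq> {..<k})"

definition graph_aut :: "'a set \<Rightarrow> ('a \<Rightarrow> 'a \<Rightarrow> bool) \<Rightarrow> ('a \<Rightarrow> 'a) \<Rightarrow> bool" where
  "graph_aut V E \<sigma> \<longleftrightarrow> bij_betw \<sigma> V V \<and> (\<forall>u\<in>V. \<forall>v\<in>V. E u v \<longleftrightarrow> E (\<sigma> u) (\<sigma> v))"

definition periodic_coloring :: "'a set \<Rightarrow> ('a \<Rightarrow> 'a \<Rightarrow> bool) \<Rightarrow> ('a \<Rightarrow> 'b) \<Rightarrow> bool" where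
  "periodic_coloring V E c \<longleftrightarrow>
     finite {{\<sigma> v | \<sigma>. graph_aut V E \<sigma> \<and> (\<forall>u\<in>V. c (\<sigma> u) = c u)} | v. v \<in> V}"

definition cayley_adj :: "('a, 'b) monoid_scheme \<Rightarrow> 'a set \<Rightarrow> 'a \<Rightarrow> 'a \<Rightarrow> bool" where
  "cayley_adj G S g h \<longleftrightarrow> g \<in> carrier G \<and> h \<in> carrier G \<and>
     h \<otimes>\<^bsub>G\<^esub> inv\<^bsub>G\<^esub> g \<in> S \<union> (\<lambda>s. inv\<^bsub>G\<^esub> s) ` S"

definition finite_gen_set :: "('a, 'b) monoid_scheme \<Rightarrow> 'a set \<Rightarrow> bool" where
  "finite_gen_set G S \<longleftrightarrow> S \<subseteq> carrier G \<and> finite S \<and> generate G S = carrier G"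

definition finitely_generated :: "('a, 'b) monoid_scheme \<Rightarrow> bool" where
  "finitely_generated G \<longleftrightarrow> (\<exists>S. finite_gen_set G S)"

text \<open>Number of ends of a f.g. group: number of ends of a Cayley graph w.r.t. a finite
  generating set (independent of the choice).\<close>
definition group_num_ends :: "('a, 'b) monoid_scheme \<Rightarrow> nat \<Rightarrow> bool" where
  "group_num_ends G k \<longleftrightarrow>
     (\<exists>S. finite_gen_set G S \<and> has_num_ends (carrier G) (cayley_adj G S) k)"

end

theory Submission
  imports Defs
begin

definition rw :: "('a \<Rightarrow> 'a \<Rightarrow> bool) \<Rightarrow> 'a set \<Rightarrow> 'a \<Rightarrow> 'a \<Rightarrow> bool" where
  "rw E Y x y \<longleftrightarrow> E x y \<and> x \<in> Y \<and> y \<in> Y"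

lemma walk_path:
  assumes "(rw E Y)\<^sup>*\<^sup>* x y" "x \<in> Y" "Y \<subseteq> V"
  shows "\<exists>p. is_path V E p \<and> hd p = x \<and> last p = y \<and> set p \<subseteq> Y"
  using assms(1)
proof (induction rule: rtranclp_induct)
  case base
  then show ?case using assms by (auto simp: is_path_def intro!: exI[of _ "[x]"])
next
  case (step y z)
  then obtain p where p: "is_path V E p" "hd p = x" "last p = y" "set p \<subseteq> Y" by blast
  have zY: "z \<in> Y" "E y z" using step(2) by (auto simp: rw_def)
  show ?case
  proof (cases "z \<in> set p")
    case True
    then obtain i where i: "i < length p" "p ! i = z" by (metis in_set_conv_nth)
    let ?q = "take (Suc i) p"
    have "is_path V E ?q" using p(1) i unfolding is_path_def
      by (auto dest: in_set_takeD)
    moreover have "hd ?q = x" using p(1,2) by (auto simp: is_path_def hd_take)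
    moreover have "last ?q = z"
    proof -
      have "length ?q = Suc i" using i by simp
      hence "last ?q = ?q ! i" by (metis diff_Suc_1 last_conv_nth list.size(3) nat.distinct(1))
      thus ?thesis using i by simp
    qed
    moreover have "set ?q \<subseteq> Y" using p(4) by (meson order_trans set_take_subset)
    ultimately show ?thesis by blast
  next
    case False
    let ?q = "p @ [z]"
    have "is_path V E ?q" unfolding is_path_def
    proof (intro conjI allI impI)
      fix j assume j: "Suc j < length ?q"
      show "E (?q ! j) (?q ! Suc j)"
      proof (cases "Suc j < length p")
        case True thus ?thesis using p(1) by (auto simp: is_path_def nth_append)
      next
        case False
        hence "j = length p - 1" "p \<noteq> []" using j p(1) by (auto simp: is_path_def)
        thus ?thesis using p(3) zY j by (auto simp: nth_append last_conv_nth)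
      qed
    qed (use p False zY assms(3) in \<open>auto simp: is_path_def\<close>)
    moreover have "hd ?q = x" using p(1,2) by (auto simp: is_path_def)
    ultimately show ?thesis using p zY by (intro exI[of _ ?q]) auto
  qed
qed

lemma greedy_paths:
  assumes "\<And>F. finite F \<Longrightarrow> \<exists>p. (is_path V E p \<and> hd p \<in> range r1 \<and> last p \<in> range r2) \<and> set p \<inter> F = {}"
  shows "rays_equiv V E r1 r2"
proof -
  define good where "good p \<longleftrightarrow> is_path V E p \<and> hd p \<in> range r1 \<and> last p \<in> range r2" for p
  define nxt where "nxt L = (SOME p. good p \<and> set p \<inter> \<Union>(set ` set L) = {})" for L :: "'a list list"
  define seq where "seq n = ((\<lambda>L. L @ [nxt L]) ^^ n) []" for n
  define P where "P n = nxt (seq n)" for n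
  have seqS: "seq (Suc n) = seq n @ [P n]" for n by (simp add: seq_def P_def)
  have setseq: "set (seq n) = P ` {..<n}" for n
    by (induction n) (auto simp: seqS seq_def[of 0] lessThan_Suc)
  have PP: "good (P n) \<and> set (P n) \<inter> \<Union>(set ` P ` {..<n}) = {}" for n
  proof -
    have "\<exists>p. good p \<and> set p \<inter> \<Union>(set ` set (seq n)) = {}"
      using assms[of "\<Union>(set ` set (seq n))"] unfolding good_def by auto
    hence "good (nxt (seq n)) \<and> set (nxt (seq n)) \<inter> \<Union>(set ` set (seq n)) = {}"
      unfolding nxt_def by (rule someI_ex)
    thus ?thesis by (simp add: P_def setseq)
  qed
  have disj: "m \<noteq> n \<Longrightarrow> set (P m) \<inter> set (P n) = {}" for m n
  proof (cases "m < n")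
    case True thus ?thesis using PP[of n] by auto
  next
    case False assume "m \<noteq> n"
    hence "n < m" using False by simp
    thus ?thesis using PP[of m] by auto
  qed
  have ne: "P n \<noteq> []" for n using PP[of n] by (simp add: good_def is_path_def)
  have "inj P"
  proof (rule injI)
    fix m n assume "P m = P n"
    thus "m = n" using disj[of m n] ne[of m] by (cases "P m") auto
  qed
  hence "infinite (range P)" by (simp add: range_inj_infinite)
  moreover have "\<forall>p\<in>range P. is_path V E p \<and> hd p \<in> range r1 \<and> last p \<in> range r2"
    using PP by (auto simp: good_def)
  moreover have "\<forall>p\<in>range P. \<forall>q\<in>range P. p \<noteq> q \<longrightarrow> set p \<inter> set q = {}"
    using disj by (metis (no_types, lifting) imageE)
  ultimately show ?thesis unfolding rays_equiv_def by blast
qed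

lemma rw_out: "(rw E Z)\<^sup>*\<^sup>* x w \<Longrightarrow> x \<notin> Z \<Longrightarrow> w = x"
  by (induction rule: converse_rtranclp_induct) (auto simp: rw_def)

lemma reach_split:
  assumes "(rw E Y)\<^sup>*\<^sup>* x w"
  shows "(rw E (Y-{v}))\<^sup>*\<^sup>* x w \<or> (\<exists>u. E v u \<and> u \<in> Y - {v} \<and> (rw E (Y-{v}))\<^sup>*\<^sup>* u w) \<or> w = v"
  using assms
proof (induction rule: converse_rtranclp_induct)
  case base
  then show ?case by simp
next
  case (step x y)
  from step.IH show ?case
  proof (elim disjE)
    assume h: "(rw E (Y - {v}))\<^sup>*\<^sup>* y w"
    show ?thesis
    proof (cases "y = v")
      case True
      then have "w = v" using rw_out[OF h] by simp
      thus ?thesis by simp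
    next
      case False
      show ?thesis
      proof (cases "x = v")
        case True
        hence "E v y \<and> y \<in> Y - {v}" using step(1) False by (auto simp: rw_def)
        thus ?thesis using h by blast
      next
        case False
        hence "rw E (Y-{v}) x y" using step(1) \<open>y \<noteq> v\<close> by (auto simp: rw_def)
        thus ?thesis using h by (meson converse_rtranclp_into_rtranclp)
      qed
    qed
  next
    assume "\<exists>u. E v u \<and> u \<in> Y - {v} \<and> (rw E (Y - {v}))\<^sup>*\<^sup>* u w"
    thus ?thesis by blast
  next
    assume "w = v" thus ?thesis by blast
  qed
qed


lemma reach_infinite_step:
  assumes locfin: "\<And>v. finite {u. E v u}"
    and inf: "infinite {w. (rw E Y)\<^sup>*\<^sup>* v w}"
  shows "\<exists>u. E v u \<and> u \<in> Y - {v} \<and> infinite {w. (rw E (Y-{v}))\<^sup>*\<^sup>* u w}"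
proof (rule ccontr)
  assume "\<not> ?thesis"
  hence fin: "\<And>u. u \<in> {u. E v u \<and> u \<in> Y - {v}} \<Longrightarrow> finite {w. (rw E (Y-{v}))\<^sup>*\<^sup>* u w}" by blast
  have "{w. (rw E Y)\<^sup>*\<^sup>* v w} \<subseteq> {v} \<union> \<Union>((\<lambda>u. {w. (rw E (Y-{v}))\<^sup>*\<^sup>* u w}) ` {u. E v u \<and> u \<in> Y - {v}})"
  proof
    fix w assume "w \<in> {w. (rw E Y)\<^sup>*\<^sup>* v w}"
    hence "(rw E Y)\<^sup>*\<^sup>* v w" by simp
    from reach_split[OF this, of v] show "w \<in> {v} \<union> \<Union>((\<lambda>u. {w. (rw E (Y-{v}))\<^sup>*\<^sup>* u w}) ` {u. E v u \<and> u \<in> Y - {v}})"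
      using rw_out[of E "Y - {v}" v w] by auto
  qed
  moreover have "finite {u. E v u \<and> u \<in> Y - {v}}" using locfin[of v] by (rule rev_finite_subset) auto
  hence "finite (\<Union>((\<lambda>u. {w. (rw E (Y-{v}))\<^sup>*\<^sup>* u w}) ` {u. E v u \<and> u \<in> Y - {v}}))"
    using fin by (intro finite_UN_I) blast+
  ultimately have "finite {w. (rw E Y)\<^sup>*\<^sup>* v w}"
    by (meson finite_Un finite.emptyI finite_insert rev_finite_subset)
  thus False using inf by simp
qed


lemma konig:
  assumes locfin: "\<And>v. finite {u. E v u}" and YV: "Y \<subseteq> V" and v0: "v0 \<in> Y"
    and inf: "infinite {w. (rw E Y)\<^sup>*\<^sup>* v0 w}"
  shows "\<exists>r. is_ray V E r \<and> range r \<subseteq> Y"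
proof -
  define Inv where "Inv st \<longleftrightarrow> fst st \<in> snd st \<and> snd st \<subseteq> Y \<and> infinite {w. (rw E (snd st))\<^sup>*\<^sup>* (fst st) w}" for st
  define step where "step st = ((SOME u. E (fst st) u \<and> u \<in> snd st - {fst st} \<and> infinite {w. (rw E (snd st - {fst st}))\<^sup>*\<^sup>* u w}), snd st - {fst st})" for st
  define st where "st n = (step ^^ n) (v0, Y)" for n
  have stS: "st (Suc n) = step (st n)" for n by (simp add: st_def)
  have stepI: "Inv (step s) \<and> E (fst s) (fst (step s)) \<and> snd (step s) = snd s - {fst s}" if "Inv s" for s
  proof -
    from that have "infinite {w. (rw E (snd s))\<^sup>*\<^sup>* (fst s) w}" by (simp add: Inv_def)
    from reach_infinite_step[OF locfin this]
    have "\<exists>u. E (fst s) u \<and> u \<in> snd s - {fst s} \<and> infinite {w. (rw E (snd s - {fst s}))\<^sup>*\<^sup>* u w}" .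
    from someI_ex[OF this] show ?thesis using that unfolding step_def Inv_def by (simp add: subset_iff)
  qed
  have inv: "Inv (st n)" for n
  proof (induction n)
    case 0 thus ?case by (simp add: st_def Inv_def v0 inf)
  next
    case (Suc n) thus ?case using stepI by (simp add: stS)
  qed
  define r where "r n = fst (st n)" for n
  have adj: "E (r n) (r (Suc n))" for n using stepI[OF inv[of n]] by (simp add: r_def stS)
  have sndS: "snd (st (Suc n)) = snd (st n) - {r n}" for n using stepI[OF inv[of n]] by (simp add: r_def stS)
  have mono: "snd (st (Suc m + k)) \<subseteq> snd (st (Suc m))" for m k
  proof (induction k)
    case (Suc k)
    have "snd (st (Suc m + Suc k)) \<subseteq> snd (st (Suc m + k))" using sndS[of "Suc m + k"] by simp
    thus ?case using Suc.IH by blast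
  qed simp
  have inj: "inj r"
  proof (rule linorder_injI)
    fix m n :: nat assume "m < n"
    then obtain k where n: "n = Suc m + k" using less_iff_Suc_add by auto
    have "r n \<in> snd (st n)" using inv[of n] by (simp add: Inv_def r_def)
    hence "r n \<in> snd (st (Suc m))" using mono[of m k] n by blast
    thus "r m \<noteq> r n" unfolding sndS by (metis Diff_iff singletonI)
  qed
  have "r n \<in> Y" for n using inv[of n] unfolding Inv_def r_def by blast
  hence "range r \<subseteq> Y" by blast
  moreover have "range r \<subseteq> V" using \<open>range r \<subseteq> Y\<close> YV by blast
  ultimately show ?thesis using inj adj unfolding is_ray_def by (intro exI[of _ r]) simp
qed



lemma stay:
  assumes "(rw E C)\<^sup>*\<^sup>* x y" "x \<in> P" "C \<inter> Q = {}" "\<And>u v. u \<in> P \<Longrightarrow> E u v \<Longrightarrow> v \<in> P \<union> Q"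
  shows "y \<in> P"
  using assms(1,2)
proof (induction rule: rtranclp_induct)
  case (step y z)
  then show ?case using assms(3) assms(4)[of y z] by (auto simp: rw_def)
qed simp

lemma exit_walk:
  assumes "E\<^sup>*\<^sup>* x y" "x \<in> P" "y \<notin> P" "\<And>u v. u \<in> P \<Longrightarrow> E u v \<Longrightarrow> v \<in> P \<union> Q"
  shows "\<exists>q\<in>Q. (rw E (P \<union> Q))\<^sup>*\<^sup>* x q"
proof -
  have "(y \<in> P \<and> (rw E (P \<union> Q))\<^sup>*\<^sup>* x y) \<or> (\<exists>q\<in>Q. (rw E (P \<union> Q))\<^sup>*\<^sup>* x q)"
    using assms(1)
  proof (induction rule: rtranclp_induct)
    case base then show ?case using assms(2) by simp
  next
    case (step y z)
    from step.IH show ?case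
    proof
      assume h: "y \<in> P \<and> (rw E (P \<union> Q))\<^sup>*\<^sup>* x y"
      hence z: "z \<in> P \<union> Q" using assms(4) step(2) by blast
      hence "(rw E (P \<union> Q))\<^sup>*\<^sup>* x z" using h step(2)
        by (metis UnI1 rtranclp.rtrancl_into_rtrancl rw_def)
      thus ?thesis using z by blast
    qed blast
  qed
  thus ?thesis using assms(3) by blast
qed

lemma path_exit:
  assumes "p \<noteq> []" "hd p \<in> P" "last p \<notin> P" "\<forall>i. Suc i < length p \<longrightarrow> E (p ! i) (p ! Suc i)"
    "\<And>u v. u \<in> P \<Longrightarrow> E u v \<Longrightarrow> v \<in> P \<union> F"
  shows "set p \<inter> F \<noteq> {}"
  using assms(1-4)
proof (induction p)
  case Nil then show ?case by simp
next
  case (Cons a p)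
  show ?case
  proof (cases "p = []")
    case True then show ?thesis using Cons.prems by simp
  next
    case False
    have "E a (hd p)" using Cons.prems(4)[rule_format, of 0] False by (simp add: hd_conv_nth)
    hence "hd p \<in> P \<union> F" using assms(5) Cons.prems(2) by simp
    moreover have "\<forall>i. Suc i < length p \<longrightarrow> E (p ! i) (p ! Suc i)"
      using Cons.prems(4) by (metis Suc_less_eq length_Cons nth_Cons_Suc)
    moreover have "last p \<notin> P" using Cons.prems(3) False by simp
    ultimately show ?thesis
    proof (elim UnE)
      assume "hd p \<in> F" thus ?thesis using False by (auto dest: hd_in_set)
    next
      assume "hd p \<in> P" "\<forall>i. Suc i < length p \<longrightarrow> E (p ! i) (p ! Suc i)" "last p \<notin> P"
      hence "set p \<inter> F \<noteq> {}" using Cons.IH False by blast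
      thus ?thesis by auto
    qed
  qed
qed

lemma sep_not_equiv:
  assumes "range r \<subseteq> P" "range r' \<subseteq> Q" "P \<inter> Q = {}"
    "\<And>u v. u \<in> P \<Longrightarrow> E u v \<Longrightarrow> v \<in> P \<union> F" "finite F"
  shows "\<not> rays_equiv V E r r'"
proof
  assume "rays_equiv V E r r'"
  then obtain PP where PP: "infinite PP" "\<forall>p\<in>PP. is_path V E p \<and> hd p \<in> range r \<and> last p \<in> range r'"
    "\<forall>p\<in>PP. \<forall>q\<in>PP. p \<noteq> q \<longrightarrow> set p \<inter> set q = {}" unfolding rays_equiv_def by blast
  have ex: "\<exists>x. x \<in> set p \<inter> F" if "p \<in> PP" for p
  proof -
    have pp: "is_path V E p" "hd p \<in> range r" "last p \<in> range r'" using PP(2) that by auto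
    have "last p \<notin> P" using pp(3) assms(2,3) by blast
    moreover have "hd p \<in> P" using pp(2) assms(1) by blast
    ultimately have "set p \<inter> F \<noteq> {}"
      using path_exit[where P=P and E=E and F=F and p=p] pp(1) assms(4) unfolding is_path_def by blast
    thus ?thesis by blast
  qed
  define f where "f p = (SOME x. x \<in> set p \<inter> F)" for p
  have f: "f p \<in> set p \<inter> F" if "p \<in> PP" for p using someI_ex[OF ex[OF that]] by (simp add: f_def)
  have "inj_on f PP"
  proof (rule inj_onI)
    fix p q assume "p \<in> PP" "q \<in> PP" "f p = f q"
    hence "f p \<in> set p \<inter> set q" using f[of p] f[of q] by simp
    thus "p = q" using PP(3) \<open>p \<in> PP\<close> \<open>q \<in> PP\<close> by (metis empty_iff)
  qed
  moreover have "f ` PP \<subseteq> F" using f by blast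
  ultimately have "finite PP" using assms(5) finite_imageD finite_subset by metis
  thus False using PP(1) by simp
qed

lemma ray_tail:
  assumes "is_ray V E r" "finite F"
  shows "\<exists>N. \<forall>n\<ge>N. r n \<notin> F"
proof -
  have fin: "finite (r -` F)" using assms by (intro finite_vimageI) (auto simp: is_ray_def)
  show ?thesis
  proof (intro exI[of _ "Suc (Max (r -` F))"] allI impI)
    fix n assume n: "Suc (Max (r -` F)) \<le> n"
    show "r n \<notin> F"
    proof
      assume "r n \<in> F"
      hence "n \<in> r -` F" by simp
      hence "n \<le> Max (r -` F)" using fin by (rule Max_ge[rotated])
      thus False using n by simp
    qed
  qed
qed

lemma ray_shift:
  assumes "is_ray V E r" shows "is_ray V E (\<lambda>n. r (n + N))"
proof -
  have "inj r" "range r \<subseteq> V" "\<forall>i. E (r i) (r (Suc i))" using assms unfolding is_ray_def by auto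
  moreover have "inj (\<lambda>n. r (n + N))"
  proof (rule injI)
    fix x y assume "r (x + N) = r (y + N)"
    hence "x + N = y + N" using \<open>inj r\<close> by (meson injD)
    thus "x = y" by simp
  qed
  ultimately show ?thesis unfolding is_ray_def by auto
qed

lemma rays_equiv_refl:
  assumes "is_ray V E r" shows "rays_equiv V E r r"
proof -
  let ?P = "range (\<lambda>n. [r n])"
  have "inj (\<lambda>n. [r n])" using assms by (auto simp: is_ray_def inj_def)
  hence "infinite ?P" by (simp add: range_inj_infinite)
  moreover have "\<forall>p\<in>?P. is_path V E p \<and> hd p \<in> range r \<and> last p \<in> range r"
    using assms by (auto simp: is_ray_def is_path_def)
  moreover have "\<forall>p\<in>?P. \<forall>q\<in>?P. p \<noteq> q \<longrightarrow> set p \<inter> set q = {}" by auto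
  ultimately show ?thesis unfolding rays_equiv_def by blast
qed

lemma two_ends_rays:
  assumes "has_num_ends V E 2"
  shows "\<exists>r1 r2. is_ray V E r1 \<and> is_ray V E r2 \<and> \<not> rays_equiv V E r1 r2"
proof (rule ccontr)
  assume "\<not> ?thesis"
  hence all: "\<And>r1 r2. is_ray V E r1 \<Longrightarrow> is_ray V E r2 \<Longrightarrow> rays_equiv V E r1 r2" by blast
  have "graph_ends V E \<subseteq> {{r'. is_ray V E r'}}"
  proof
    fix Z assume "Z \<in> graph_ends V E"
    then obtain r where r: "Z = {r'. is_ray V E r' \<and> rays_equiv V E r r'}" "is_ray V E r"
      unfolding graph_ends_def by blast
    have "Z = {r'. is_ray V E r'}" unfolding r(1) using all[OF r(2)] by auto
    thus "Z \<in> {{r'. is_ray V E r'}}" by simp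
  qed
  hence "card (graph_ends V E) \<le> card {{r'. is_ray V E r'}}" by (intro card_mono) simp_all
  hence "card (graph_ends V E) \<le> 1" by simp
  thus False using assms by (simp add: has_num_ends_def)
qed

lemma three_rays:
  assumes "is_ray V E r1" "is_ray V E r2" "is_ray V E r3"
    "\<not> rays_equiv V E r1 r2" "\<not> rays_equiv V E r1 r3" "\<not> rays_equiv V E r2 r3"
  shows "\<not> has_num_ends V E 2"
proof
  assume h: "has_num_ends V E 2"
  define cls where "cls r = {r'. is_ray V E r' \<and> rays_equiv V E r r'}" for r
  have mem: "cls r \<in> graph_ends V E" if "is_ray V E r" for r
    using that unfolding graph_ends_def cls_def by blast
  have neq: "cls a \<noteq> cls b" if "is_ray V E b" "\<not> rays_equiv V E a b" for a b
  proof
    assume "cls a = cls b"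
    moreover have "b \<in> cls b" using that rays_equiv_refl[of V E b] by (simp add: cls_def)
    ultimately have "b \<in> cls a" by simp
    thus False using that by (simp add: cls_def)
  qed
  have "{cls r1, cls r2, cls r3} \<subseteq> graph_ends V E" using mem[OF assms(1)] mem[OF assms(2)] mem[OF assms(3)] by simp
  moreover have "card {cls r1, cls r2, cls r3} = 3"
    using neq[OF assms(2,4)] neq[OF assms(3,5)] neq[OF assms(3,6)] by simp
  moreover have "finite (graph_ends V E)" using h by (simp add: has_num_ends_def)
  ultimately have "3 \<le> card (graph_ends V E)" by (metis card_mono)
  thus False using h by (simp add: has_num_ends_def)
qed



locale cay = group G for G (structure) +
  fixes S0 :: "'a set"
  assumes S0c: "S0 \<subseteq> carrier G" and finS0: "finite S0" and gen: "generate G S0 = carrier G"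
begin

abbreviation "Ec \<equiv> cayley_adj G S0"

lemma E_V: "Ec g h \<Longrightarrow> g \<in> carrier G \<and> h \<in> carrier G"
  by (simp add: cayley_adj_def)

lemma E_sym: assumes "Ec g h" shows "Ec h g"
proof -
  have g: "g \<in> carrier G" and h: "h \<in> carrier G" and s: "h \<otimes> inv g \<in> S0 \<union> (\<lambda>s. inv s) ` S0"
    using assms by (auto simp: cayley_adj_def)
  have "g \<otimes> inv h = inv (h \<otimes> inv g)" using g h by (simp add: inv_mult_group m_assoc)
  moreover have "inv (h \<otimes> inv g) \<in> S0 \<union> (\<lambda>s. inv s) ` S0"
  proof (cases "h \<otimes> inv g \<in> S0")
    case True thus ?thesis by blast
  next
    case False
    then obtain s where "s \<in> S0" "h \<otimes> inv g = inv s" using s by blast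
    hence "inv (h \<otimes> inv g) = s" using S0c by auto
    thus ?thesis using \<open>s \<in> S0\<close> by blast
  qed
  ultimately show ?thesis using g h by (simp add: cayley_adj_def)
qed

lemma E_right:
  assumes "x \<in> carrier G" "g \<in> carrier G" "h \<in> carrier G"
  shows "Ec (g \<otimes> x) (h \<otimes> x) \<longleftrightarrow> Ec g h"
proof -
  have "(h \<otimes> x) \<otimes> inv (g \<otimes> x) = h \<otimes> inv g"
    using assms by (simp add: inv_mult_group m_assoc[symmetric]) (simp add: m_assoc)
  thus ?thesis using assms by (simp add: cayley_adj_def)
qed

lemma E_right1:
  assumes "x \<in> carrier G" "Ec g h" shows "Ec (g \<otimes> x) (h \<otimes> x)"
  using E_right[OF assms(1)] E_V[OF assms(2)] assms(2) by blast

lemma locfin: "finite {h. Ec g h}"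
proof (cases "g \<in> carrier G")
  case True
  have "{h. Ec g h} \<subseteq> (\<lambda>s. s \<otimes> g) ` (S0 \<union> (\<lambda>s. inv s) ` S0)"
  proof
    fix h assume "h \<in> {h. Ec g h}"
    hence h: "h \<in> carrier G" "h \<otimes> inv g \<in> S0 \<union> (\<lambda>s. inv s) ` S0" by (auto simp: cayley_adj_def)
    have "h = (h \<otimes> inv g) \<otimes> g" using h True by (simp add: m_assoc)
    thus "h \<in> (\<lambda>s. s \<otimes> g) ` (S0 \<union> (\<lambda>s. inv s) ` S0)" using h(2) by blast
  qed
  moreover have "finite ((\<lambda>s. s \<otimes> g) ` (S0 \<union> (\<lambda>s. inv s) ` S0))" using finS0 by simp
  ultimately show ?thesis by (rule finite_subset)
next
  case False thus ?thesis by (simp add: cayley_adj_def)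
qed

lemma walk_right:
  assumes "Ec\<^sup>*\<^sup>* g h" "x \<in> carrier G" "g \<in> carrier G"
  shows "Ec\<^sup>*\<^sup>* (g \<otimes> x) (h \<otimes> x)"
  using assms(1)
proof (induction rule: rtranclp_induct)
  case (step y z)
  thus ?case using E_right1[OF assms(2) step(2)] by (meson rtranclp.rtrancl_into_rtrancl)
qed simp

lemma connected: assumes "g \<in> carrier G" shows "Ec\<^sup>*\<^sup>* \<one> g"
proof -
  have "g \<in> generate G S0" using assms gen by simp
  thus ?thesis
  proof (induction rule: generate.induct)
    case one thus ?case by simp
  next
    case (incl h)
    hence "Ec \<one> h" using S0c by (auto simp: cayley_adj_def)
    thus ?case by simp
  next
    case (inv h)
    hence "Ec \<one> (inv h)" using S0c by (auto simp: cayley_adj_def)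
    thus ?case by simp
  next
    case (eng h1 h2)
    have c: "h1 \<in> carrier G" "h2 \<in> carrier G" using eng.hyps gen by auto
    have "Ec\<^sup>*\<^sup>* (\<one> \<otimes> h2) (h1 \<otimes> h2)" using walk_right[OF eng.IH(1) c(2)] by simp
    hence "Ec\<^sup>*\<^sup>* h2 (h1 \<otimes> h2)" using c by simp
    thus ?case using eng.IH(2) by (meson rtranclp_trans)
  qed
qed

definition ball :: "nat \<Rightarrow> 'a \<Rightarrow> 'a set" where
  "ball k c = {y. \<exists>j\<le>k. (Ec ^^ j) c y}"

lemma pow_carrier: "(Ec ^^ j) c y \<Longrightarrow> c \<in> carrier G \<Longrightarrow> y \<in> carrier G"
  by (induction j arbitrary: y) (auto elim!: relpowp_Suc_E dest: E_V)

lemma ball_carrier: "c \<in> carrier G \<Longrightarrow> ball k c \<subseteq> carrier G"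
  unfolding ball_def using pow_carrier by blast

lemma ball_center: "c \<in> ball k c"
  unfolding ball_def by (intro CollectI exI[of _ 0]) simp

lemma ball_mono: "k \<le> m \<Longrightarrow> ball k c \<subseteq> ball m c"
  unfolding ball_def using le_trans by blast

lemma ball_finite: "finite (ball k c)"
proof (induction k)
  case 0
  have "ball 0 c = {c}" unfolding ball_def by auto
  thus ?case by simp
next
  case (Suc k)
  have "ball (Suc k) c \<subseteq> ball k c \<union> (\<Union>y\<in>ball k c. {z. Ec y z})"
  proof
    fix z assume "z \<in> ball (Suc k) c"
    then obtain j where j: "j \<le> Suc k" "(Ec ^^ j) c z" unfolding ball_def by blast
    show "z \<in> ball k c \<union> (\<Union>y\<in>ball k c. {z. Ec y z})"
    proof (cases "j \<le> k")
      case True thus ?thesis using j unfolding ball_def by blast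
    next
      case False
      hence "j = Suc k" using j by simp
      then obtain y where "(Ec ^^ k) c y" "Ec y z" using j(2) by (auto elim: relpowp_Suc_E)
      hence "y \<in> ball k c" unfolding ball_def by blast
      thus ?thesis using \<open>Ec y z\<close> by blast
    qed
  qed
  moreover have "finite (ball k c \<union> (\<Union>y\<in>ball k c. {z. Ec y z}))"
    using Suc.IH locfin by simp
  ultimately show ?case by (rule finite_subset)
qed

lemma ball_conn: assumes "y \<in> ball k c" shows "(rw Ec (ball k c))\<^sup>*\<^sup>* c y"
proof -
  have "(Ec ^^ j) c y \<Longrightarrow> j \<le> k \<Longrightarrow> (rw Ec (ball k c))\<^sup>*\<^sup>* c y" for j y
  proof (induction j arbitrary: y)
    case 0 thus ?case by simp
  next
    case (Suc j)
    then obtain y' where y': "(Ec ^^ j) c y'" "Ec y' y" by (auto elim: relpowp_Suc_E)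
    have "y' \<in> ball k c" using y' Suc.prems(2) unfolding ball_def by (intro CollectI exI[of _ j]) simp
    moreover have "(Ec ^^ Suc j) c y" using y' by (meson relpowp_Suc_I)
    hence "y \<in> ball k c" using Suc.prems(2) unfolding ball_def by blast
    ultimately have "y' \<in> ball k c" "y \<in> ball k c" by auto
    hence "rw Ec (ball k c) y' y" using y' by (simp add: rw_def)
    moreover have "(rw Ec (ball k c))\<^sup>*\<^sup>* c y'" using Suc.IH[OF y'(1)] Suc.prems by simp
    ultimately show ?case by (meson rtranclp.rtrancl_into_rtrancl)
  qed
  thus ?thesis using assms unfolding ball_def by blast
qed

lemma pow_right: "(Ec ^^ j) c y \<Longrightarrow> x \<in> carrier G \<Longrightarrow> (Ec ^^ j) (c \<otimes> x) (y \<otimes> x)"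
proof (induction j arbitrary: y)
  case 0 thus ?case by simp
next
  case (Suc j)
  then obtain y' where y': "(Ec ^^ j) c y'" "Ec y' y" by (auto elim: relpowp_Suc_E)
  thus ?case using Suc.IH[OF y'(1) Suc.prems(2)] E_right1[OF Suc.prems(2) y'(2)] by (meson relpowp_Suc_I)
qed

lemma ball_right: "y \<in> ball k c \<Longrightarrow> x \<in> carrier G \<Longrightarrow> y \<otimes> x \<in> ball k (c \<otimes> x)"
  unfolding ball_def using pow_right by blast

lemma pow_sym: "(Ec ^^ j) c y \<Longrightarrow> (Ec ^^ j) y c"
proof (induction j arbitrary: y)
  case 0 thus ?case by simp
next
  case (Suc j)
  then obtain y' where y': "(Ec ^^ j) c y'" "Ec y' y" by (auto elim: relpowp_Suc_E)
  thus ?case using Suc.IH[OF y'(1)] E_sym[OF y'(2)] by (meson relpowp_Suc_I2)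
qed

lemma ball_sym: "y \<in> ball k c \<Longrightarrow> c \<in> ball k y"
  unfolding ball_def using pow_sym by blast

lemma ball_trans: "y \<in> ball k c \<Longrightarrow> z \<in> ball m y \<Longrightarrow> z \<in> ball (k + m) c"
proof -
  assume "y \<in> ball k c" "z \<in> ball m y"
  then obtain i j where "i \<le> k" "(Ec ^^ i) c y" "j \<le> m" "(Ec ^^ j) y z" unfolding ball_def by blast
  hence "(Ec ^^ (i + j)) c z" "i + j \<le> k + m" by (auto intro: relpowp_trans)
  thus ?thesis unfolding ball_def by blast
qed

lemma in_some_ball: assumes "g \<in> carrier G" shows "\<exists>k. g \<in> ball k \<one>"
proof -
  obtain n where "(Ec ^^ n) \<one> g" using rtranclp_imp_relpowp[OF connected[OF assms]] by blast
  thus ?thesis unfolding ball_def by blast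
qed

lemma finite_in_ball: assumes "finite F" "F \<subseteq> carrier G" shows "\<exists>k. F \<subseteq> ball k \<one>"
  using assms
proof (induction F rule: finite_induct)
  case empty thus ?case by simp
next
  case (insert x F)
  then obtain k where k: "F \<subseteq> ball k \<one>" by auto
  obtain m where m: "x \<in> ball m \<one>" using in_some_ball insert.prems by auto
  have "F \<subseteq> ball (k + m) \<one>" using k ball_mono[of k "k+m" \<one>] by auto
  moreover have "x \<in> ball (k + m) \<one>" using m ball_mono[of m "k+m" \<one>] by auto
  ultimately show ?case by blast
qed

end


context cay begin

definition part :: "'a set \<Rightarrow> 'a set \<Rightarrow> 'a set \<Rightarrow> bool" where
  "part F P Q \<longleftrightarrow> finite F \<and> F \<inter> P = {} \<and> F \<inter> Q = {} \<and> P \<inter> Q = {} \<and> F \<union> P \<union> Q = carrier G \<and>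
     (\<forall>u v. u \<in> P \<longrightarrow> Ec u v \<longrightarrow> v \<in> P \<union> F) \<and> (\<forall>u v. u \<in> Q \<longrightarrow> Ec u v \<longrightarrow> v \<in> Q \<union> F)"

lemma pow_succ: "a \<in> carrier G \<Longrightarrow> a [^] (i + 1 :: int) = a [^] i \<otimes> a"
  by (simp add: int_pow_mult)

lemma pow_pred: "a \<in> carrier G \<Longrightarrow> a [^] (i - 1 :: int) = a [^] i \<otimes> inv a"
  using int_pow_diff[of a i 1] by simp

lemma walk_sym: "Ec\<^sup>*\<^sup>* x y \<Longrightarrow> Ec\<^sup>*\<^sup>* y x"
proof (induction rule: rtranclp_induct)
  case (step y z) thus ?case using E_sym by (meson converse_rtranclp_into_rtranclp)
qed simp

lemma rw_sym: "(rw Ec Y)\<^sup>*\<^sup>* x y \<Longrightarrow> (rw Ec Y)\<^sup>*\<^sup>* y x"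
proof (induction rule: rtranclp_induct)
  case (step y z)
  hence "rw Ec Y z y" using E_sym by (auto simp: rw_def)
  thus ?case using step.IH by (meson converse_rtranclp_into_rtranclp)
qed simp

lemma rw_mono: "(rw Ec Y)\<^sup>*\<^sup>* x y \<Longrightarrow> Y \<subseteq> Y' \<Longrightarrow> (rw Ec Y')\<^sup>*\<^sup>* x y"
proof (induction rule: rtranclp_induct)
  case (step y z)
  hence "rw Ec Y' y z" by (auto simp: rw_def)
  thus ?case using step.IH step.prems by (meson rtranclp.rtrancl_into_rtrancl)
qed simp

lemma rw_in: "(rw Ec Y)\<^sup>*\<^sup>* x y \<Longrightarrow> x \<in> Y \<Longrightarrow> y \<in> Y"
  by (induction rule: rtranclp_induct) (auto simp: rw_def)

end


context cay begin

lemma right_ray: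
  assumes "is_ray (carrier G) Ec r" "a \<in> carrier G"
  shows "is_ray (carrier G) Ec (\<lambda>n. r n \<otimes> a)"
proof -
  have r: "inj r" "range r \<subseteq> carrier G" "\<And>i. Ec (r i) (r (Suc i))" using assms(1) unfolding is_ray_def by auto
  have "inj (\<lambda>n. r n \<otimes> a)"
  proof (rule injI)
    fix m n assume "r m \<otimes> a = r n \<otimes> a"
    moreover have "r m \<in> carrier G" "r n \<in> carrier G" using r(2) by auto
    ultimately have "r m = r n" using r_cancel[of a "r m" "r n"] assms(2) by simp
    thus "m = n" using r(1) by (meson injD)
  qed
  moreover have "range (\<lambda>n. r n \<otimes> a) \<subseteq> carrier G" using r(2) assms(2) by auto
  moreover have "\<And>i. Ec (r i \<otimes> a) (r (Suc i) \<otimes> a)" using E_right1[OF assms(2) r(3)] by simp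
  ultimately show ?thesis unfolding is_ray_def by blast
qed

lemma strip_finite:
  assumes ends: "has_num_ends (carrier G) Ec 2"
    and pt: "part F P Q" and oneF: "\<one> \<in> F"
    and al: "is_ray (carrier G) Ec \<alpha>" "range \<alpha> \<subseteq> P"
    and be: "is_ray (carrier G) Ec \<beta>" "range \<beta> \<subseteq> Q"
    and a: "a \<in> carrier G" and tr: "\<forall>u \<in> F \<union> P. u \<otimes> a \<in> P"
  shows "finite {g \<in> P. g \<otimes> inv a \<in> Q}"
proof (rule ccontr)
  define W where "W = {g \<in> P. g \<otimes> inv a \<in> Q}"
  assume "infinite {g \<in> P. g \<otimes> inv a \<in> Q}"
  hence Winf: "infinite W" by (simp add: W_def)
  have finF: "finite F" and d1: "F \<inter> P = {}" and d2: "F \<inter> Q = {}" and d3: "P \<inter> Q = {}"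
    and cov: "F \<union> P \<union> Q = carrier G"
    and clP: "\<And>u v. u \<in> P \<Longrightarrow> Ec u v \<Longrightarrow> v \<in> P \<union> F"
    and clQ: "\<And>u v. u \<in> Q \<Longrightarrow> Ec u v \<Longrightarrow> v \<in> Q \<union> F"
    using pt unfolding part_def by blast+
  have ia: "inv a \<in> carrier G" using a by simp
  define Fa where "Fa = (\<lambda>f. f \<otimes> a) ` F"
  have finFa: "finite Fa" using finF by (simp add: Fa_def)
  define Y where "Y = W \<union> (F \<union> Fa)"
  have WP: "W \<subseteq> P" by (auto simp: W_def)
  have Pc: "P \<subseteq> carrier G" "F \<subseteq> carrier G" "Q \<subseteq> carrier G" using cov by auto
  have Fac: "Fa \<subseteq> carrier G" using Pc a by (auto simp: Fa_def)
  have Yc: "Y \<subseteq> carrier G" using WP Pc Fac by (auto simp: Y_def)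
  have bk: "v = (v \<otimes> inv a) \<otimes> a" if "v \<in> carrier G" for v using that a by (simp add: m_assoc)
  have clW: "v \<in> W \<union> (F \<union> Fa)" if "w \<in> W" "Ec w v" for w v
  proof -
    have v: "v \<in> P \<union> F" using clP[OF _ that(2)] that(1) WP by blast
    have "Ec (w \<otimes> inv a) (v \<otimes> inv a)" using E_right1[OF ia that(2)] .
    moreover have "w \<otimes> inv a \<in> Q" using that(1) by (simp add: W_def)
    ultimately have vQ: "v \<otimes> inv a \<in> Q \<union> F" using clQ by blast
    have vc: "v \<in> carrier G" using E_V[OF that(2)] by simp
    show ?thesis
    proof (cases "v \<in> F")
      case True thus ?thesis by simp
    next
      case False
      hence vP: "v \<in> P" using v by simp
      show ?thesis
      proof (cases "v \<otimes> inv a \<in> Q")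
        case True thus ?thesis using vP by (simp add: W_def)
      next
        case False
        hence "v \<otimes> inv a \<in> F" using vQ by simp
        hence "v \<in> Fa" unfolding Fa_def using bk[OF vc] by blast
        thus ?thesis by simp
      qed
    qed
  qed
  have one_notW: "\<one> \<notin> W" using oneF d1 WP by blast
  have reachW: "\<exists>q\<in>F \<union> Fa. (rw Ec Y)\<^sup>*\<^sup>* q w" if "w \<in> W" for w
  proof -
    have wc: "w \<in> carrier G" using that WP Pc by blast
    have "Ec\<^sup>*\<^sup>* w \<one>" using walk_sym[OF connected[OF wc]] .
    moreover have clW': "\<And>u v. u \<in> W \<Longrightarrow> Ec u v \<Longrightarrow> v \<in> W \<union> (F \<union> Fa)" using clW by blast
    ultimately have "\<exists>q\<in>F \<union> Fa. (rw Ec (W \<union> (F \<union> Fa)))\<^sup>*\<^sup>* w q"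
      using exit_walk[of Ec w \<one> W "F \<union> Fa"] that one_notW by blast
    then
    obtain q where "q \<in> F \<union> Fa" "(rw Ec (W \<union> (F \<union> Fa)))\<^sup>*\<^sup>* w q" by blast
    thus ?thesis using rw_sym unfolding Y_def by blast
  qed
  have "\<exists>q\<in>F \<union> Fa. infinite {w. (rw Ec Y)\<^sup>*\<^sup>* q w}"
  proof (rule ccontr)
    assume "\<not> ?thesis"
    hence "\<forall>q\<in>F \<union> Fa. finite {w. (rw Ec Y)\<^sup>*\<^sup>* q w}" by blast
    hence "finite (\<Union>q\<in>F \<union> Fa. {w. (rw Ec Y)\<^sup>*\<^sup>* q w})" using finF finFa by blast
    moreover have "W \<subseteq> (\<Union>q\<in>F \<union> Fa. {w. (rw Ec Y)\<^sup>*\<^sup>* q w})" using reachW by blast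
    ultimately show False using Winf finite_subset by blast
  qed
  then obtain q where q: "q \<in> F \<union> Fa" "infinite {w. (rw Ec Y)\<^sup>*\<^sup>* q w}" by blast
  have "q \<in> Y" using q(1) by (simp add: Y_def)
  from konig[of Ec Y "carrier G" q, OF locfin Yc this q(2)]
  obtain \<rho> where \<rho>: "is_ray (carrier G) Ec \<rho>" "range \<rho> \<subseteq> Y" by blast
  obtain N where N: "\<forall>n\<ge>N. \<rho> n \<notin> F \<union> Fa" using ray_tail[OF \<rho>(1)] finF finFa by blast
  define \<rho>' where "\<rho>' n = \<rho> (n + N)" for n
  have r1: "is_ray (carrier G) Ec \<rho>'" unfolding \<rho>'_def by (rule ray_shift[OF \<rho>(1)])
  have r1W: "range \<rho>' \<subseteq> W"
  proof
    fix x assume "x \<in> range \<rho>'"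
    then obtain n where "x = \<rho> (n + N)" by (auto simp: \<rho>'_def)
    moreover have "\<rho> (n + N) \<in> Y" "\<rho> (n + N) \<notin> F \<union> Fa" using \<rho>(2) N by auto
    ultimately show "x \<in> W" by (auto simp: Y_def)
  qed
  define \<alpha>' where "\<alpha>' n = \<alpha> n \<otimes> a" for n
  have r3: "is_ray (carrier G) Ec \<alpha>'" unfolding \<alpha>'_def by (rule right_ray[OF al(1) a])
  have r3P: "range \<alpha>' \<subseteq> P" using tr al(2) by (auto simp: \<alpha>'_def)
  have s1: "\<not> rays_equiv (carrier G) Ec \<rho>' \<beta>"
    by (rule sep_not_equiv[where P=P and Q=Q and F=F]) (use r1W WP be(2) d3 clP finF in auto)
  have s3: "\<not> rays_equiv (carrier G) Ec \<beta> \<alpha>'"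
    by (rule sep_not_equiv[where P=Q and Q=P and F=F]) (use r3P be(2) d3 clQ finF in auto)
  define Pa where "Pa = {g \<in> carrier G. g \<otimes> inv a \<in> Q}"
  define Qa where "Qa = {g \<in> carrier G. g \<otimes> inv a \<in> P}"
  define Fa' where "Fa' = {g \<in> carrier G. g \<otimes> inv a \<in> F}"
  have "Fa' \<subseteq> Fa" unfolding Fa'_def Fa_def using bk by blast
  hence finFa': "finite Fa'" using finFa finite_subset by blast
  have r1Pa: "range \<rho>' \<subseteq> Pa" using r1W WP Pc by (auto simp: W_def Pa_def)
  have r3Qa: "range \<alpha>' \<subseteq> Qa"
  proof
    fix x assume "x \<in> range \<alpha>'"
    then obtain n where x: "x = \<alpha> n \<otimes> a" by (auto simp: \<alpha>'_def)
    have "\<alpha> n \<in> P" using al(2) by auto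
    hence "\<alpha> n \<in> carrier G" using Pc by auto
    hence "x \<otimes> inv a = \<alpha> n" "x \<in> carrier G" using a x by (auto simp: m_assoc)
    thus "x \<in> Qa" using \<open>\<alpha> n \<in> P\<close> by (simp add: Qa_def)
  qed
  have dPQa: "Pa \<inter> Qa = {}" using d3 by (auto simp: Pa_def Qa_def)
  have clPa: "v \<in> Pa \<union> Fa'" if "u \<in> Pa" "Ec u v" for u v
  proof -
    have "Ec (u \<otimes> inv a) (v \<otimes> inv a)" using E_right1[OF ia that(2)] .
    hence "v \<otimes> inv a \<in> Q \<union> F" using clQ that(1) by (auto simp: Pa_def)
    moreover have "v \<in> carrier G" using E_V[OF that(2)] by simp
    ultimately show ?thesis by (auto simp: Pa_def Fa'_def)
  qed
  have s2: "\<not> rays_equiv (carrier G) Ec \<rho>' \<alpha>'"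
    by (rule sep_not_equiv[where P=Pa and Q=Qa and F=Fa']) (use r1Pa r3Qa dPQa clPa finFa' in auto)
  have "\<not> has_num_ends (carrier G) Ec 2" using three_rays[OF r1 be(1) r3 s1 s2 s3] .
  thus False using ends by simp
qed

end


context cay begin

lemma transl_lemma:
  assumes ends: "has_num_ends (carrier G) Ec 2"
    and pt: "part F P Q" and oneF: "\<one> \<in> F"
    and al: "is_ray (carrier G) Ec \<alpha>" "range \<alpha> \<subseteq> P"
    and be: "is_ray (carrier G) Ec \<beta>" "range \<beta> \<subseteq> Q"
    and a: "a \<in> carrier G" and tr: "\<forall>u \<in> F \<union> P. u \<otimes> a \<in> P"
  shows "\<exists>L :: 'a \<Rightarrow> int. (\<forall>g\<in>carrier G. L (g \<otimes> a) = L g + 1) \<and> finite {g\<in>carrier G. L g = 0}"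
proof -
  have finF: "finite F" and d1: "F \<inter> P = {}" and d2: "F \<inter> Q = {}" and d3: "P \<inter> Q = {}"
    and cov: "F \<union> P \<union> Q = carrier G"
    and clP: "\<And>u v. u \<in> P \<Longrightarrow> Ec u v \<Longrightarrow> v \<in> P \<union> F"
    and clQ: "\<And>u v. u \<in> Q \<Longrightarrow> Ec u v \<Longrightarrow> v \<in> Q \<union> F"
    using pt unfolding part_def by blast+
  have ia: "inv a \<in> carrier G" using a by simp
  have Qinv: "w \<otimes> inv a \<in> Q" if "w \<in> Q \<union> F" for w
  proof -
    have wc: "w \<in> carrier G" using that cov by blast
    have c: "w \<otimes> inv a \<in> carrier G" using wc a by simp
    show ?thesis
    proof (rule ccontr)
      assume "w \<otimes> inv a \<notin> Q"
      hence "w \<otimes> inv a \<in> F \<union> P" using c cov by blast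
      hence "(w \<otimes> inv a) \<otimes> a \<in> P" using tr by blast
      hence "w \<in> P" using wc a by (simp add: m_assoc)
      thus False using that d1 d3 by blast
    qed
  qed
  define inU where "inU n g \<longleftrightarrow> g \<otimes> a [^] (- n) \<in> F \<union> P" for n :: int and g
  have notin: "\<not> inU n g \<longleftrightarrow> g \<otimes> a [^] (- n) \<in> Q" if "g \<in> carrier G" for n g
  proof -
    have "g \<otimes> a [^] (- n) \<in> carrier G" using that a by simp
    thus ?thesis unfolding inU_def using cov d2 d3 by blast
  qed
  have stepP: "g \<otimes> a [^] (- n) \<in> P" if "g \<in> carrier G" "inU (n + 1) g" for n g
  proof -
    have "a [^] (- n) = a [^] (- (n + 1)) \<otimes> a" using pow_succ[OF a, of "- (n+1)"] by simp
    hence "g \<otimes> a [^] (- n) = (g \<otimes> a [^] (- (n + 1))) \<otimes> a" using that(1) a by (simp add: m_assoc)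
    thus ?thesis using tr that(2) unfolding inU_def by simp
  qed
  have down: "inU n g" if "g \<in> carrier G" "inU (n + 1) g" for n g
    using stepP[OF that] unfolding inU_def by simp
  have downk: "inU n g" if "g \<in> carrier G" "inU (n + int k) g" for n g k
    using that(2)
  proof (induction k arbitrary: n)
    case 0 thus ?case by simp
  next
    case (Suc k)
    have "inU ((n + 1) + int k) g" using Suc.prems by (simp add: add.assoc)
    hence "inU (n + 1) g" using Suc.IH by blast
    thus ?case using down[OF that(1)] by blast
  qed
  have nb: "inU n h" if "g \<in> carrier G" "inU (n + 1) g" "Ec g h" for n g h
  proof -
    have "g \<otimes> a [^] (- n) \<in> P" using stepP[OF that(1,2)] .
    moreover have "Ec (g \<otimes> a [^] (- n)) (h \<otimes> a [^] (- n))" using E_right1[OF _ that(3)] a by simp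
    ultimately have "h \<otimes> a [^] (- n) \<in> P \<union> F" using clP by blast
    thus ?thesis unfolding inU_def by blast
  qed
  have nbk: "inU n h" if "(Ec ^^ k) g h" "g \<in> carrier G" "inU (n + int k) g" for k n g h
    using that
  proof (induction k arbitrary: n h)
    case 0 thus ?case by simp
  next
    case (Suc k)
    then obtain y where y: "(Ec ^^ k) g y" "Ec y h" by (auto elim: relpowp_Suc_E)
    have "inU ((n + 1) + int k) g" using Suc.prems(3) by (simp add: add.assoc)
    hence "inU (n + 1) y" using Suc.IH[OF y(1) Suc.prems(2)] by blast
    moreover have "y \<in> carrier G" using E_V[OF y(2)] by simp
    ultimately show ?case using nb y(2) by blast
  qed
  have nbQ: "\<not> inU (n + 1) h" if "g \<in> carrier G" "\<not> inU n g" "Ec g h" for n g h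
  proof -
    have "g \<otimes> a [^] (- n) \<in> Q" using notin[OF that(1)] that(2) by simp
    moreover have "Ec (g \<otimes> a [^] (- n)) (h \<otimes> a [^] (- n))" using E_right1[OF _ that(3)] a by simp
    ultimately have "h \<otimes> a [^] (- n) \<in> Q \<union> F" using clQ by blast
    hence "(h \<otimes> a [^] (- n)) \<otimes> inv a \<in> Q" using Qinv by blast
    moreover have "a [^] (- (n + 1)) = a [^] (- n) \<otimes> inv a" using pow_pred[OF a, of "- n"] by simp
    moreover have hc: "h \<in> carrier G" using E_V[OF that(3)] by simp
    ultimately have "h \<otimes> a [^] (- (n + 1)) \<in> Q" using a by (simp add: m_assoc)
    thus ?thesis using notin[OF hc] by simp
  qed
  have nbQk: "\<not> inU (n + int k) h" if "(Ec ^^ k) g h" "g \<in> carrier G" "\<not> inU n g" for k n g h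
    using that
  proof (induction k arbitrary: h)
    case 0 thus ?case by simp
  next
    case (Suc k)
    then obtain y where y: "(Ec ^^ k) g y" "Ec y h" by (auto elim: relpowp_Suc_E)
    have "\<not> inU (n + int k) y" using Suc.IH[OF y(1) Suc.prems(2,3)] .
    moreover have "y \<in> carrier G" using E_V[OF y(2)] by simp
    ultimately have "\<not> inU (n + int k + 1) h" using nbQ y(2) by blast
    moreover have "n + int k + 1 = n + int (Suc k)" by simp
    ultimately show ?case by metis
  qed
  have exin: "\<exists>m. inU m g" if gc: "g \<in> carrier G" for g
  proof -
    obtain k where k: "(Ec ^^ k) g \<one>" using rtranclp_imp_relpowp[OF walk_sym[OF connected[OF gc]]] by blast
    have "inU 0 \<one>" using oneF by (simp add: inU_def)
    hence "inU (- int k) g" using nbQk[OF k gc, of "- int k"] by auto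
    thus ?thesis by blast
  qed
  have exout: "\<exists>m. \<not> inU m g" if gc: "g \<in> carrier G" for g
  proof -
    have b0: "\<beta> 0 \<in> Q" using be(2) by auto
    have "\<beta> 0 \<in> carrier G" using b0 cov by blast
    obtain k where k: "(Ec ^^ k) g (\<beta> 0)" using rtranclp_imp_relpowp[OF rtranclp_trans[OF walk_sym[OF connected[OF gc]] connected[OF \<open>\<beta> 0 \<in> carrier G\<close>]]] by blast
    have "\<not> inU 0 (\<beta> 0)" using b0 d2 d3 \<open>\<beta> 0 \<in> carrier G\<close> by (auto simp: inU_def)
    hence "\<not> inU (0 + int k) g" using nbk[OF k gc, of 0] by blast
    thus ?thesis by blast
  qed
  have exlev_k: "\<exists>n. inU n g \<and> \<not> inU (n + 1) g" if "inU m g" "\<not> inU (m + int k) g" for m k g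
    using that
  proof (induction k arbitrary: m)
    case 0 thus ?case by simp
  next
    case (Suc k)
    show ?case
    proof (cases "inU (m + 1) g")
      case True
      have "\<not> inU ((m + 1) + int k) g" using Suc.prems(2) by (simp add: add.assoc)
      thus ?thesis using Suc.IH[OF True] by blast
    next
      case False thus ?thesis using Suc.prems(1) by blast
    qed
  qed
  have exlev: "\<exists>n. inU n g \<and> \<not> inU (n + 1) g" if gc: "g \<in> carrier G" for g
  proof -
    obtain m1 m2 where m: "inU m1 g" "\<not> inU m2 g" using exin[OF gc] exout[OF gc] by blast
    have "m1 < m2"
    proof (rule ccontr)
      assume "\<not> m1 < m2"
      hence "m1 = m2 + int (nat (m1 - m2))" by simp
      thus False using downk[OF gc, of m2 "nat (m1 - m2)"] m by simp
    qed
    hence "m2 = m1 + int (nat (m2 - m1))" by simp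
    thus ?thesis using exlev_k[OF m(1), of "nat (m2 - m1)"] m(2) by simp
  qed
  have uniq: "n = n'" if "g \<in> carrier G" "inU n g" "\<not> inU (n + 1) g" "inU n' g" "\<not> inU (n' + 1) g" for g n n'
  proof (rule ccontr)
    assume "n \<noteq> n'"
    show False
    proof (cases "n < n'")
      case True
      hence "n' = (n + 1) + int (nat (n' - n - 1))" by simp
      thus False using downk[OF that(1), of "n + 1" "nat (n' - n - 1)"] that(3,4) by simp
    next
      case False
      hence "n = (n' + 1) + int (nat (n - n' - 1))" using \<open>n \<noteq> n'\<close> by simp
      thus False using downk[OF that(1), of "n' + 1" "nat (n - n' - 1)"] that(2,5) by simp
    qed
  qed
  define L where "L g = (THE n. inU n g \<and> \<not> inU (n + 1) g)" for g
  have Leq: "L g = n" if "g \<in> carrier G" "inU n g" "\<not> inU (n + 1) g" for g n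
    unfolding L_def using uniq[OF that(1)] that by (intro the_equality) blast+
  have Lprop: "inU (L g) g \<and> \<not> inU (L g + 1) g" if "g \<in> carrier G" for g
    using exlev[OF that] Leq[OF that] by auto
  have shift: "inU (n + 1) (g \<otimes> a) \<longleftrightarrow> inU n g" if "g \<in> carrier G" for n g
  proof -
    have "a [^] (- n) = a \<otimes> a [^] (- (n + 1))" using int_pow_mult[OF a, of 1 "- (n + 1)"] a by simp
    hence "(g \<otimes> a) \<otimes> a [^] (- (n + 1)) = g \<otimes> a [^] (- n)" using that a by (simp add: m_assoc)
    thus ?thesis unfolding inU_def by simp
  qed
  have Lshift: "L (g \<otimes> a) = L g + 1" if "g \<in> carrier G" for g
  proof -
    have ga: "g \<otimes> a \<in> carrier G" using that a by simp
    have "inU (L g + 1) (g \<otimes> a)" using Lprop[OF that] shift[OF that] by auto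
    moreover have "\<not> inU (L g + 1 + 1) (g \<otimes> a)" using Lprop[OF that] shift[OF that, of "L g + 1"] by simp
    ultimately show ?thesis using Leq[OF ga] by blast
  qed
  have "{g \<in> carrier G. L g = 0} \<subseteq> F \<union> {g \<in> P. g \<otimes> inv a \<in> Q}"
  proof
    fix g assume g: "g \<in> {g \<in> carrier G. L g = 0}"
    hence gc: "g \<in> carrier G" and "inU 0 g" "\<not> inU 1 g" using Lprop[of g] by auto
    hence "g \<in> F \<union> P" by (simp add: inU_def)
    moreover have "g \<otimes> a [^] (- 1 :: int) \<in> Q" using notin[OF gc, of 1] \<open>\<not> inU 1 g\<close> by simp
    hence "g \<otimes> inv a \<in> Q" using a by (simp add: int_pow_neg)
    ultimately show "g \<in> F \<union> {g \<in> P. g \<otimes> inv a \<in> Q}" by blast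
  qed
  moreover have "finite (F \<union> {g \<in> P. g \<otimes> inv a \<in> Q})"
    using finF strip_finite[OF assms] by simp
  ultimately have "finite {g \<in> carrier G. L g = 0}" by (rule finite_subset)
  thus ?thesis using Lshift by blast
qed

end


context cay begin

lemma part_sym: "part F P Q \<Longrightarrow> part F Q P"
  unfolding part_def by (simp add: Int_commute Un_commute Un_left_commute)

lemma hub:
  assumes pt: "part F P Q" and FR: "F = ball R \<one>" and y: "y \<in> F \<union> P"
  shows "(rw Ec (F \<union> P))\<^sup>*\<^sup>* \<one> y"
proof -
  have d1: "F \<inter> P = {}" and cov: "F \<union> P \<union> Q = carrier G"
    and clP: "\<And>u v. u \<in> P \<Longrightarrow> Ec u v \<Longrightarrow> v \<in> P \<union> F"
    using pt unfolding part_def by blast+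
  have oneF: "\<one> \<in> F" using FR ball_center by simp
  have inF: "(rw Ec (F \<union> P))\<^sup>*\<^sup>* \<one> q" if "q \<in> F" for q
    using rw_mono[OF ball_conn[of q R \<one>]] that FR by auto
  show ?thesis
  proof (cases "y \<in> F")
    case True thus ?thesis using inF by blast
  next
    case False
    hence yP: "y \<in> P" using y by simp
    have yc: "y \<in> carrier G" using yP cov by blast
    have "Ec\<^sup>*\<^sup>* y \<one>" using walk_sym[OF connected[OF yc]] .
    moreover have "\<one> \<notin> P" using oneF d1 by blast
    ultimately obtain q where q: "q \<in> F" "(rw Ec (P \<union> F))\<^sup>*\<^sup>* y q"
      using exit_walk[of Ec y \<one> P F] yP clP by blast
    have "(rw Ec (F \<union> P))\<^sup>*\<^sup>* q y" using rw_sym[OF q(2)] by (simp add: Un_commute)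
    thus ?thesis using inF[OF q(1)] by (meson rtranclp_trans)
  qed
qed

lemma deep:
  assumes pt: "part F P Q" and FR: "F = ball R \<one>" and Pinf: "infinite P"
  shows "\<exists>x\<in>carrier G. \<forall>f\<in>F. f \<otimes> x \<in> P"
proof -
  have d1: "F \<inter> P = {}" and cov: "F \<union> P \<union> Q = carrier G"
    and clP: "\<And>u v. u \<in> P \<Longrightarrow> Ec u v \<Longrightarrow> v \<in> P \<union> F"
    using pt unfolding part_def by blast+
  have "P - ball (R + R) \<one> \<noteq> {}" using Pinf ball_finite[of "R+R" \<one>]
    by (metis Diff_eq_empty_iff finite_subset)
  then obtain x where x: "x \<in> P" "x \<notin> ball (R + R) \<one>" by blast
  have xc: "x \<in> carrier G" using x(1) cov by blast
  have disj: "ball R x \<inter> F = {}"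
  proof (rule ccontr)
    assume "ball R x \<inter> F \<noteq> {}"
    then obtain z where z: "z \<in> ball R x" "z \<in> ball R \<one>" using FR by blast
    have "x \<in> ball (R + R) \<one>" using ball_trans[OF z(2) ball_sym[OF z(1)]] .
    thus False using x(2) by simp
  qed
  have "f \<otimes> x \<in> P" if "f \<in> F" for f
  proof -
    have "f \<otimes> x \<in> ball R (\<one> \<otimes> x)" using ball_right[of f R \<one> x] that FR xc by simp
    hence "f \<otimes> x \<in> ball R x" using xc by simp
    hence "(rw Ec (ball R x))\<^sup>*\<^sup>* x (f \<otimes> x)" by (rule ball_conn)
    thus ?thesis using stay[of Ec "ball R x" x "f \<otimes> x" P F] x(1) disj clP by blast
  qed
  thus ?thesis using xc by blast
qed

lemma side:
  assumes pt: "part F P Q" and xc: "x \<in> carrier G"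
    and hubC: "\<And>c. c \<in> C \<Longrightarrow> (rw Ec C)\<^sup>*\<^sup>* h c" and hC: "h \<in> C" and Cc: "C \<subseteq> carrier G"
    and avoid: "\<And>c. c \<in> C \<Longrightarrow> c \<otimes> inv x \<notin> F"
  shows "(\<forall>c\<in>C. c \<otimes> inv x \<in> P) \<or> (\<forall>c\<in>C. c \<otimes> inv x \<in> Q)"
proof -
  have d3: "P \<inter> Q = {}" and cov: "F \<union> P \<union> Q = carrier G"
    and clP: "\<And>u v. u \<in> P \<Longrightarrow> Ec u v \<Longrightarrow> v \<in> P \<union> F"
    and clQ: "\<And>u v. u \<in> Q \<Longrightarrow> Ec u v \<Longrightarrow> v \<in> Q \<union> F"
    using pt unfolding part_def by blast+
  have ix: "inv x \<in> carrier G" using xc by simp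
  have gen: "\<forall>c\<in>C. c \<otimes> inv x \<in> P'" if "h \<otimes> inv x \<in> P'" "P' = P \<or> P' = Q" for P'
  proof
    fix c assume c: "c \<in> C"
    define P2 where "P2 = {c \<in> carrier G. c \<otimes> inv x \<in> P'}"
    define Q2 where "Q2 = {c \<in> carrier G. c \<otimes> inv x \<in> F}"
    have cl: "v \<in> P2 \<union> Q2" if "u \<in> P2" "Ec u v" for u v
    proof -
      have "Ec (u \<otimes> inv x) (v \<otimes> inv x)" using E_right1[OF ix that(2)] .
      hence "v \<otimes> inv x \<in> P' \<union> F" using clP clQ that(1) \<open>P' = P \<or> P' = Q\<close> unfolding P2_def by blast
      moreover have "v \<in> carrier G" using E_V[OF that(2)] by simp
      ultimately show ?thesis by (auto simp: P2_def Q2_def)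
    qed
    have "h \<in> P2" using that(1) hC Cc by (auto simp: P2_def)
    moreover have "C \<inter> Q2 = {}" using avoid by (auto simp: Q2_def)
    ultimately have "c \<in> P2" using stay[of Ec C h c P2 Q2] hubC[OF c] cl by blast
    thus "c \<otimes> inv x \<in> P'" by (simp add: P2_def)
  qed
  have "h \<otimes> inv x \<in> carrier G" using hC Cc ix by auto
  hence "h \<otimes> inv x \<in> P \<or> h \<otimes> inv x \<in> Q" using avoid[OF hC] cov by blast
  thus ?thesis using gen by blast
qed

lemma flip:
  assumes pt: "part F P Q" and oneF: "\<one> \<in> F"
    and hubC: "\<And>c. c \<in> F \<union> Q \<Longrightarrow> (rw Ec (F \<union> Q))\<^sup>*\<^sup>* \<one> c"
    and xc: "x \<in> carrier G" and Fx: "\<forall>f\<in>F. f \<otimes> x \<in> P"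
  shows "(\<forall>u\<in>F \<union> P. u \<otimes> x \<in> P) \<or> (\<forall>u\<in>F \<union> Q. u \<otimes> x \<in> P)"
proof -
  have d1: "F \<inter> P = {}" and d3: "P \<inter> Q = {}" and cov: "F \<union> P \<union> Q = carrier G"
    using pt unfolding part_def by blast+
  have Cc: "F \<union> Q \<subseteq> carrier G" using cov by blast
  have back2: "c = (c \<otimes> inv x) \<otimes> x" if "c \<in> carrier G" for c using that xc by (simp add: m_assoc)
  have back3: "(u \<otimes> x) \<otimes> inv x = u" if "u \<in> carrier G" for u using that xc by (simp add: m_assoc)
  have avoid: "c \<otimes> inv x \<notin> F" if "c \<in> F \<union> Q" for c
  proof
    assume "c \<otimes> inv x \<in> F"
    hence "(c \<otimes> inv x) \<otimes> x \<in> P" using Fx by blast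
    hence "c \<in> P" using back2 that Cc by auto
    thus False using that d1 d3 by blast
  qed
  have "(\<forall>c\<in>F \<union> Q. c \<otimes> inv x \<in> P) \<or> (\<forall>c\<in>F \<union> Q. c \<otimes> inv x \<in> Q)"
    by (rule side[OF pt xc hubC _ Cc avoid]) (use oneF in auto)
  thus ?thesis
  proof
    assume h: "\<forall>c\<in>F \<union> Q. c \<otimes> inv x \<in> P"
    have "u \<otimes> x \<in> P" if "u \<in> F \<union> Q" for u
    proof (cases "u \<in> F")
      case True thus ?thesis using Fx by blast
    next
      case False
      hence uQ: "u \<in> Q" using that by simp
      have uc: "u \<in> carrier G" using uQ cov by blast
      show ?thesis
      proof (rule ccontr)
        assume "u \<otimes> x \<notin> P"
        moreover have "u \<otimes> x \<in> carrier G" using uc xc by simp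
        ultimately have "u \<otimes> x \<in> F \<union> Q" using cov by blast
        hence "(u \<otimes> x) \<otimes> inv x \<in> P" using h by blast
        hence "u \<in> P" using back3[OF uc] by simp
        thus False using uQ d3 by blast
      qed
    qed
    thus ?thesis by blast
  next
    assume h: "\<forall>c\<in>F \<union> Q. c \<otimes> inv x \<in> Q"
    have "u \<otimes> x \<in> P" if "u \<in> F \<union> P" for u
    proof (cases "u \<in> F")
      case True thus ?thesis using Fx by blast
    next
      case False
      hence uP: "u \<in> P" using that by simp
      have uc: "u \<in> carrier G" using uP cov by blast
      show ?thesis
      proof (rule ccontr)
        assume "u \<otimes> x \<notin> P"
        moreover have "u \<otimes> x \<in> carrier G" using uc xc by simp
        ultimately have "u \<otimes> x \<in> F \<union> Q" using cov by blast
        hence "(u \<otimes> x) \<otimes> inv x \<in> Q" using h by blast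
        hence "u \<in> Q" using back3[OF uc] by simp
        thus False using uP d3 by blast
      qed
    qed
    thus ?thesis by blast
  qed
qed

end


context cay begin

lemma virt:
  assumes ends: "has_num_ends (carrier G) Ec 2"
  shows "\<exists>a\<in>carrier G. \<exists>L :: 'a \<Rightarrow> int. (\<forall>g\<in>carrier G. L (g \<otimes> a) = L g + 1) \<and> finite {g\<in>carrier G. L g = 0}"
proof -
  obtain r1 r2 where r: "is_ray (carrier G) Ec r1" "is_ray (carrier G) Ec r2" "\<not> rays_equiv (carrier G) Ec r1 r2"
    using two_ends_rays[OF ends] by blast
  have "\<exists>F0. finite F0 \<and> \<not> (\<exists>p. (is_path (carrier G) Ec p \<and> hd p \<in> range r1 \<and> last p \<in> range r2) \<and> set p \<inter> F0 = {})"
  proof (rule ccontr)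
    assume "\<not> ?thesis"
    hence "\<And>F0. finite F0 \<Longrightarrow> \<exists>p. (is_path (carrier G) Ec p \<and> hd p \<in> range r1 \<and> last p \<in> range r2) \<and> set p \<inter> F0 = {}"
      by blast
    from greedy_paths[OF this] r(3) show False by simp
  qed
  then obtain F0 where F0: "finite F0" "\<not> (\<exists>p. (is_path (carrier G) Ec p \<and> hd p \<in> range r1 \<and> last p \<in> range r2) \<and> set p \<inter> F0 = {})"
    by blast
  obtain R where R: "F0 \<inter> carrier G \<subseteq> ball R \<one>" using finite_in_ball[of "F0 \<inter> carrier G"] F0(1) by blast
  define F where "F = ball R \<one>"
  have finF: "finite F" by (simp add: F_def ball_finite)
  have oneF: "\<one> \<in> F" by (simp add: F_def ball_center)
  have Fc: "F \<subseteq> carrier G" by (simp add: F_def ball_carrier)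
  have sepF: "set p \<inter> F \<noteq> {}" if "is_path (carrier G) Ec p" "hd p \<in> range r1" "last p \<in> range r2" for p
  proof -
    have "set p \<inter> F0 \<noteq> {}" using F0(2) that by blast
    moreover have "set p \<subseteq> carrier G" using that(1) by (simp add: is_path_def)
    ultimately show ?thesis using R unfolding F_def by blast
  qed
  obtain N1 where N1: "\<forall>n\<ge>N1. r1 n \<notin> F" using ray_tail[OF r(1) finF] by blast
  obtain N2 where N2: "\<forall>n\<ge>N2. r2 n \<notin> F" using ray_tail[OF r(2) finF] by blast
  define \<alpha> where "\<alpha> n = r1 (n + N1)" for n
  define \<beta> where "\<beta> n = r2 (n + N2)" for n
  have al: "is_ray (carrier G) Ec \<alpha>" unfolding \<alpha>_def by (rule ray_shift[OF r(1)])
  have be: "is_ray (carrier G) Ec \<beta>" unfolding \<beta>_def by (rule ray_shift[OF r(2)])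
  have alc: "\<alpha> n \<in> carrier G - F" for n using al N1 unfolding is_ray_def \<alpha>_def by auto
  have bec: "\<beta> n \<in> carrier G - F" for n using be N2 unfolding is_ray_def \<beta>_def by auto
  define A where "A = {x. (rw Ec (carrier G - F))\<^sup>*\<^sup>* (\<alpha> 0) x}"
  define B where "B = carrier G - F - A"
  have Asub: "A \<subseteq> carrier G - F" unfolding A_def using rw_in alc by blast
  have alA: "range \<alpha> \<subseteq> A"
  proof -
    have "\<alpha> n \<in> A" for n
    proof (induction n)
      case 0 thus ?case by (simp add: A_def)
    next
      case (Suc n)
      have "Ec (\<alpha> n) (\<alpha> (Suc n))" using al unfolding is_ray_def by blast
      hence "rw Ec (carrier G - F) (\<alpha> n) (\<alpha> (Suc n))" using alc[of n] alc[of "Suc n"] by (simp add: rw_def)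
      moreover have "(rw Ec (carrier G - F))\<^sup>*\<^sup>* (\<alpha> 0) (\<alpha> n)" using Suc by (simp add: A_def)
      ultimately show ?case unfolding A_def using rtranclp.rtrancl_into_rtrancl[of "rw Ec (carrier G - F)" "\<alpha> 0" "\<alpha> n" "\<alpha> (Suc n)"] by simp
    qed
    thus ?thesis by blast
  qed
  have beB: "range \<beta> \<subseteq> B"
  proof -
    have "\<beta> m \<notin> A" for m
    proof
      assume "\<beta> m \<in> A"
      hence "(rw Ec (carrier G - F))\<^sup>*\<^sup>* (\<alpha> 0) (\<beta> m)" by (simp add: A_def)
      from walk_path[OF this alc[of 0], of "carrier G"]
      obtain p where p: "is_path (carrier G) Ec p" "hd p = \<alpha> 0" "last p = \<beta> m" "set p \<subseteq> carrier G - F" by blast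
      have "hd p \<in> range r1" "last p \<in> range r2" using p(2,3) by (auto simp: \<alpha>_def \<beta>_def)
      hence "set p \<inter> F \<noteq> {}" using sepF p(1) by blast
      thus False using p(4) by blast
    qed
    thus ?thesis using bec unfolding B_def by blast
  qed
  have clA: "v \<in> A \<union> F" if "u \<in> A" "Ec u v" for u v
  proof (cases "v \<in> F")
    case False
    hence "rw Ec (carrier G - F) u v" using that Asub E_V[OF that(2)] by (auto simp: rw_def)
    moreover have "(rw Ec (carrier G - F))\<^sup>*\<^sup>* (\<alpha> 0) u" using that(1) by (simp add: A_def)
    ultimately have "v \<in> A" unfolding A_def using rtranclp.rtrancl_into_rtrancl[of "rw Ec (carrier G - F)" "\<alpha> 0" u v] by simp
    thus ?thesis by simp
  qed simp
  have clB: "v \<in> B \<union> F" if "u \<in> B" "Ec u v" for u v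
  proof (rule ccontr)
    assume "v \<notin> B \<union> F"
    moreover have "v \<in> carrier G" using E_V[OF that(2)] by simp
    ultimately have "v \<in> A" by (auto simp: B_def)
    moreover have "u \<in> carrier G - F" using that(1) by (auto simp: B_def)
    ultimately have "u \<in> A \<union> F" using clA[of v u] E_sym[OF that(2)] by blast
    thus False using that(1) by (auto simp: B_def)
  qed
  have pt: "part F A B" unfolding part_def
    using finF Asub Fc clA clB by (auto simp: B_def)
  have injr: "infinite (range \<alpha>)" "infinite (range \<beta>)" using al be unfolding is_ray_def
    by (auto simp: range_inj_infinite)
  have Ainf: "infinite A" using injr(1) alA finite_subset by blast
  have Binf: "infinite B" using injr(2) beB finite_subset by blast
  have hubB: "\<And>c. c \<in> F \<union> B \<Longrightarrow> (rw Ec (F \<union> B))\<^sup>*\<^sup>* \<one> c" using hub[OF part_sym[OF pt] F_def] by blast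
  have hubA: "\<And>c. c \<in> F \<union> A \<Longrightarrow> (rw Ec (F \<union> A))\<^sup>*\<^sup>* \<one> c" using hub[OF pt F_def] by blast
  obtain x where x: "x \<in> carrier G" "\<forall>f\<in>F. f \<otimes> x \<in> A" using deep[OF pt F_def Ainf] by blast
  obtain y where y: "y \<in> carrier G" "\<forall>f\<in>F. f \<otimes> y \<in> B" using deep[OF part_sym[OF pt] F_def Binf] by blast
  have fx: "(\<forall>u\<in>F \<union> A. u \<otimes> x \<in> A) \<or> (\<forall>u\<in>F \<union> B. u \<otimes> x \<in> A)"
    using flip[OF pt oneF hubB x] .
  have fy: "(\<forall>u\<in>F \<union> B. u \<otimes> y \<in> B) \<or> (\<forall>u\<in>F \<union> A. u \<otimes> y \<in> B)"
    using flip[OF part_sym[OF pt] oneF hubA y] .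
  show ?thesis
  proof (cases "\<forall>u\<in>F \<union> A. u \<otimes> x \<in> A")
    case True
    thus ?thesis using transl_lemma[OF ends pt oneF al alA be beB x(1)] x(1) by blast
  next
    case False
    hence fx': "\<forall>u\<in>F \<union> B. u \<otimes> x \<in> A" using fx by blast
    show ?thesis
    proof (cases "\<forall>u\<in>F \<union> B. u \<otimes> y \<in> B")
      case True
      thus ?thesis using transl_lemma[OF ends part_sym[OF pt] oneF be beB al alA y(1)] y(1) by blast
    next
      case False
      hence fy': "\<forall>u\<in>F \<union> A. u \<otimes> y \<in> B" using fy by blast
      have zc: "x \<otimes> y \<in> carrier G" using x(1) y(1) by simp
      have "u \<otimes> (x \<otimes> y) \<in> B" if "u \<in> F \<union> B" for u
      proof -
        have uc: "u \<in> carrier G" using that Fc B_def by blast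
        have "u \<otimes> x \<in> A" using fx' that by blast
        hence "(u \<otimes> x) \<otimes> y \<in> B" using fy' by blast
        thus ?thesis using uc x(1) y(1) by (simp add: m_assoc)
      qed
      hence "\<forall>u\<in>F \<union> B. u \<otimes> (x \<otimes> y) \<in> B" by blast
      thus ?thesis using transl_lemma[OF ends part_sym[OF pt] oneF be beB al alA zc] zc by blast
    qed
  qed
qed

end


locale colr = group G for G (structure) +
  fixes S :: "'a set" and a :: 'a and L :: "'a \<Rightarrow> int"
  assumes Sc: "S \<subseteq> carrier G" and finS: "finite S" and oneS: "\<one> \<notin> S"
    and ac: "a \<in> carrier G" and Lsh: "\<And>g. g \<in> carrier G \<Longrightarrow> L (g \<otimes> a) = L g + 1"
    and finD: "finite {g \<in> carrier G. L g = 0}"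
begin

abbreviation "E \<equiv> cayley_adj G S"
abbreviation "D0 \<equiv> {g \<in> carrier G. L g = 0}"

lemma E_V: "E g h \<Longrightarrow> g \<in> carrier G \<and> h \<in> carrier G"
  by (simp add: cayley_adj_def)

lemma E_sym: assumes "E g h" shows "E h g"
proof -
  have g: "g \<in> carrier G" and h: "h \<in> carrier G" and s: "h \<otimes> inv g \<in> S \<union> (\<lambda>s. inv s) ` S"
    using assms by (auto simp: cayley_adj_def)
  have "g \<otimes> inv h = inv (h \<otimes> inv g)" using g h by (simp add: inv_mult_group m_assoc)
  moreover have "inv (h \<otimes> inv g) \<in> S \<union> (\<lambda>s. inv s) ` S"
  proof (cases "h \<otimes> inv g \<in> S")
    case True thus ?thesis by blast
  next
    case False
    then obtain s where "s \<in> S" "h \<otimes> inv g = inv s" using s by blast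
    hence "inv (h \<otimes> inv g) = s" using Sc by auto
    thus ?thesis using \<open>s \<in> S\<close> by blast
  qed
  ultimately show ?thesis using g h by (simp add: cayley_adj_def)
qed

lemma E_right:
  assumes "x \<in> carrier G" "g \<in> carrier G" "h \<in> carrier G"
  shows "E (g \<otimes> x) (h \<otimes> x) \<longleftrightarrow> E g h"
proof -
  have "(h \<otimes> x) \<otimes> inv (g \<otimes> x) = h \<otimes> inv g"
    using assms by (simp add: inv_mult_group m_assoc[symmetric]) (simp add: m_assoc)
  thus ?thesis using assms by (simp add: cayley_adj_def)
qed

lemma E_irrefl: "\<not> E g g"
proof
  assume "E g g"
  hence g: "g \<in> carrier G" and "g \<otimes> inv g \<in> S \<union> (\<lambda>s. inv s) ` S" by (auto simp: cayley_adj_def)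
  hence "\<one> \<in> S \<union> (\<lambda>s. inv s) ` S" by simp
  moreover have "\<one> \<notin> (\<lambda>s. inv s) ` S"
  proof
    assume "\<one> \<in> (\<lambda>s. inv s) ` S"
    then obtain s where s: "s \<in> S" "\<one> = inv s" by blast
    have "s \<in> carrier G" using s(1) Sc by blast
    hence "s = \<one>" using s(2) inv_eq_1_iff by metis
    thus False using s(1) oneS by simp
  qed
  ultimately show False using oneS by simp
qed

lemma L_pow_nat: "g \<in> carrier G \<Longrightarrow> L (g \<otimes> a [^] (int n)) = L g + int n"
proof (induction n arbitrary: g)
  case 0 thus ?case by simp
next
  case (Suc n)
  have "a [^] int (Suc n) = a [^] (int n + 1)" by (simp add: add.commute)
  also have "\<dots> = a [^] (int n) \<otimes> a" using int_pow_mult[OF ac, of "int n" 1] ac by simp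
  finally have "a [^] int (Suc n) = a [^] (int n) \<otimes> a" .
  hence "g \<otimes> a [^] int (Suc n) = (g \<otimes> a [^] (int n)) \<otimes> a" using Suc.prems ac by (simp add: m_assoc)
  thus ?case using Lsh[of "g \<otimes> a [^] (int n)"] Suc.IH[OF Suc.prems] Suc.prems ac by simp
qed

lemma L_pow: assumes g: "g \<in> carrier G" shows "L (g \<otimes> a [^] (n::int)) = L g + n"
proof (cases "n \<ge> 0")
  case True
  then obtain k where "n = int k" by (metis nonneg_eq_int)
  thus ?thesis using L_pow_nat[OF g] by simp
next
  case False
  then obtain k where k: "n = - int k" by (metis nonpos_int_cases linorder_not_le less_imp_le)
  have c: "g \<otimes> a [^] n \<in> carrier G" using g ac by simp
  have "(g \<otimes> a [^] n) \<otimes> a [^] (int k) = g \<otimes> (a [^] n \<otimes> a [^] (int k))" using g ac by (simp add: m_assoc)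
  also have "a [^] n \<otimes> a [^] (int k) = a [^] (n + int k)" using int_pow_mult[OF ac] by simp
  also have "n + int k = 0" using k by simp
  finally have "(g \<otimes> a [^] n) \<otimes> a [^] (int k) = g" using g by simp
  hence "L g = L (g \<otimes> a [^] n) + int k" using L_pow_nat[OF c, of k] by simp
  thus ?thesis using k by simp
qed

definition red :: "'a \<Rightarrow> 'a" where "red g = g \<otimes> a [^] (- L g)"

lemma red: assumes g: "g \<in> carrier G"
  shows "red g \<in> D0" "red g \<otimes> a [^] (L g) = g"
proof -
  show "red g \<in> D0" using L_pow[OF g, of "- L g"] g ac by (simp add: red_def)
  have "red g \<otimes> a [^] (L g) = g \<otimes> (a [^] (- L g) \<otimes> a [^] (L g))" using g ac by (simp add: red_def m_assoc)
  also have "a [^] (- L g) \<otimes> a [^] (L g) = \<one>" using int_pow_mult[OF ac, of "- L g" "L g"] by simp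
  finally show "red g \<otimes> a [^] (L g) = g" using g by simp
qed

definition K0 :: int where
  "K0 = Max ((\<lambda>(s, d). \<bar>L (s \<otimes> d)\<bar>) ` ((S \<union> (\<lambda>s. inv s) ` S) \<times> D0))"

lemma K0_bound: assumes "E g h" shows "\<bar>L h - L g\<bar> \<le> K0"
proof -
  have g: "g \<in> carrier G" and h: "h \<in> carrier G" and s: "h \<otimes> inv g \<in> S \<union> (\<lambda>s. inv s) ` S"
    using assms by (auto simp: cayley_adj_def)
  define s where "s = h \<otimes> inv g"
  have sc: "s \<in> carrier G" using g h by (simp add: s_def)
  have "h = s \<otimes> g" using g h by (simp add: s_def m_assoc)
  also have "g = red g \<otimes> a [^] (L g)" using red(2)[OF g] by simp
  finally have "h = (s \<otimes> red g) \<otimes> a [^] (L g)" using sc red(1)[OF g] ac by (simp add: m_assoc)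
  hence "L h = L (s \<otimes> red g) + L g" using L_pow[of "s \<otimes> red g" "L g"] sc red(1)[OF g] by simp
  moreover have "\<bar>L (s \<otimes> red g)\<bar> \<le> K0"
  proof -
    have fin: "finite ((\<lambda>(s, d). \<bar>L (s \<otimes> d)\<bar>) ` ((S \<union> (\<lambda>s. inv s) ` S) \<times> D0))"
      using finS finD by simp
    have "(s, red g) \<in> (S \<union> (\<lambda>s. inv s) ` S) \<times> D0" using s red(1)[OF g] by (simp add: s_def)
    hence "\<bar>L (s \<otimes> red g)\<bar> \<in> (\<lambda>(s, d). \<bar>L (s \<otimes> d)\<bar>) ` ((S \<union> (\<lambda>s. inv s) ` S) \<times> D0)" by force
    thus ?thesis unfolding K0_def using fin by (rule Max_ge[rotated])
  qed
  ultimately show ?thesis by simp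
qed

lemma right_aut: assumes b: "b \<in> carrier G" shows "graph_aut (carrier G) E (\<lambda>x. x \<otimes> b)"
proof -
  have "bij_betw (\<lambda>x. x \<otimes> b) (carrier G) (carrier G)"
  proof (rule bij_betwI[where g="\<lambda>x. x \<otimes> inv b"])
    show "(\<lambda>x. x \<otimes> b) \<in> carrier G \<rightarrow> carrier G" using b by simp
    show "(\<lambda>x. x \<otimes> inv b) \<in> carrier G \<rightarrow> carrier G" using b by simp
  qed (use b in \<open>simp_all add: m_assoc\<close>)
  moreover have "\<forall>u\<in>carrier G. \<forall>v\<in>carrier G. E u v \<longleftrightarrow> E (u \<otimes> b) (v \<otimes> b)"
    using E_right[OF b] by simp
  ultimately show ?thesis unfolding graph_aut_def by blast
qed

lemma aut_comp:
  assumes "graph_aut (carrier G) E \<sigma>" "graph_aut (carrier G) E \<tau>"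
  shows "graph_aut (carrier G) E (\<sigma> \<circ> \<tau>)"
proof -
  have "bij_betw (\<sigma> \<circ> \<tau>) (carrier G) (carrier G)"
    using assms unfolding graph_aut_def by (meson bij_betw_trans)
  moreover have tc: "\<And>u. u \<in> carrier G \<Longrightarrow> \<tau> u \<in> carrier G" 
    using assms(2) unfolding graph_aut_def bij_betw_def by blast
  moreover have "\<forall>u\<in>carrier G. \<forall>v\<in>carrier G. E u v \<longleftrightarrow> E ((\<sigma> \<circ> \<tau>) u) ((\<sigma> \<circ> \<tau>) v)"
  proof (intro ballI)
    fix u v assume u: "u \<in> carrier G" and v: "v \<in> carrier G"
    have "E u v \<longleftrightarrow> E (\<tau> u) (\<tau> v)" using assms(2) u v unfolding graph_aut_def by blast
    also have "\<dots> \<longleftrightarrow> E (\<sigma> (\<tau> u)) (\<sigma> (\<tau> v))"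
      using assms(1) tc[OF u] tc[OF v]
      unfolding graph_aut_def by blast
    finally show "E u v \<longleftrightarrow> E ((\<sigma> \<circ> \<tau>) u) ((\<sigma> \<circ> \<tau>) v)" by simp
  qed
  ultimately show ?thesis unfolding graph_aut_def by blast
qed

end


lemma dvd_small_int:
  fixes M d :: int
  assumes "M > 0" "M dvd d" "\<bar>d\<bar> < M" shows "d = 0"
proof (rule ccontr)
  assume "d \<noteq> 0"
  obtain t where t: "d = M * t" using assms(2) by (auto elim: dvdE)
  hence "t \<noteq> 0" using \<open>d \<noteq> 0\<close> by simp
  hence "1 \<le> \<bar>t\<bar>" by simp
  hence "M * 1 \<le> M * \<bar>t\<bar>" using assms(1) by (intro mult_left_mono) simp_all
  also have "M * \<bar>t\<bar> = \<bar>d\<bar>" using t assms(1) by (simp add: abs_mult)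
  finally show False using assms(3) by simp
qed

context colr begin

definition M0 :: int where "M0 = max K0 0 + 1"

lemma M0_pos: "M0 > 0" by (simp add: M0_def)

lemma adj_L_eq:
  assumes "E g h" "L g mod M0 = L h mod M0" shows "L g = L h"
proof -
  have "M0 dvd (L g - L h)" using assms(2) by (simp add: mod_eq_dvd_iff)
  moreover have "\<bar>L g - L h\<bar> < M0" using K0_bound[OF assms(1)] by (simp add: M0_def abs_minus_commute)
  ultimately have "L g - L h = 0" using dvd_small_int M0_pos by blast
  thus ?thesis by simp
qed

lemma fin_coloring: "\<exists>k c. proper_coloring (carrier G) E c \<and> c ` carrier G \<subseteq> {..<k}"
proof -
  define T where "T = D0 \<times> {0..<M0}"
  have finT: "finite T" using finD by (simp add: T_def)
  obtain f :: "'a \<times> int \<Rightarrow> nat" and n where f: "f ` T = {i. i < n}" "inj_on f T"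
    using finite_imp_inj_to_nat_seg[OF finT] by blast
  define c where "c g = f (red g, L g mod M0)" for g
  have inT: "(red g, L g mod M0) \<in> T" if "g \<in> carrier G" for g
    using red(1)[OF that] M0_pos by (simp add: T_def)
  have "c ` carrier G \<subseteq> {..<n}" using inT f(1) unfolding c_def by blast
  moreover have "proper_coloring (carrier G) E c"
    unfolding proper_coloring_def
  proof (intro ballI impI)
    fix g h assume g: "g \<in> carrier G" and h: "h \<in> carrier G" and e: "E g h"
    show "c g \<noteq> c h"
    proof
      assume "c g = c h"
      hence "(red g, L g mod M0) = (red h, L h mod M0)"
        using f(2) inT[OF g] inT[OF h] unfolding c_def by (meson inj_onD)
      hence r: "red g = red h" and m: "L g mod M0 = L h mod M0" by auto
      have "L g = L h" using adj_L_eq[OF e m] .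
      hence "g = h" using red(2)[OF g] red(2)[OF h] r by metis
      thus False using e E_irrefl by simp
    qed
  qed
  ultimately show ?thesis by blast
qed

abbreviation "chi \<equiv> chromatic_number (carrier G) E"

lemma chi_coloring: "\<exists>c. proper_coloring (carrier G) E c \<and> c ` carrier G \<subseteq> {..<chi}"
  unfolding chromatic_number_def using fin_coloring by (rule LeastI_ex)

end


context colr begin

lemma powmul: "d \<in> carrier G \<Longrightarrow> (d \<otimes> a [^] (t::int)) \<otimes> a [^] (s::int) = d \<otimes> a [^] (t + s)"
  using ac by (simp add: m_assoc int_pow_mult)

lemma periodic_exists:
  "\<exists>c'. proper_coloring (carrier G) E c' \<and> c' ` carrier G \<subseteq> {..<chi} \<and> periodic_coloring (carrier G) E c'"
proof -
  obtain c where cp: "proper_coloring (carrier G) E c" and cr: "c ` carrier G \<subseteq> {..<chi}"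
    using chi_coloring by blast
  define K :: nat where "K = nat M0"
  have K1: "K \<ge> 1" and KM: "int K = M0" using M0_pos by (auto simp: K_def)
  have adjK: "L h - L g < int K" "L g - L h < int K" if "E g h" for g h
    using K0_bound[OF that] KM by (auto simp: M0_def)
  define st where "st m = restrict (\<lambda>(d, j). c (d \<otimes> a [^] (int (m * K + j)))) (D0 \<times> {..<K})" for m
  have stin: "st m \<in> (\<Pi>\<^sub>E x \<in> D0 \<times> {..<K}. {..<chi})" for m
  proof -
    have "c (d \<otimes> a [^] (int (m * K + j))) \<in> {..<chi}" if "d \<in> D0" for d j
    proof -
      have "d \<otimes> a [^] (int (m * K + j)) \<in> carrier G" using that ac by simp
      thus ?thesis using cr by blast
    qed
    thus ?thesis unfolding st_def by (auto simp: PiE_iff)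
  qed
  have finst: "finite (\<Pi>\<^sub>E x \<in> D0 \<times> {..<K}. {..<chi})" using finD by (intro finite_PiE) auto
  have "\<not> inj st"
  proof
    assume "inj st"
    hence "infinite (range st)" by (simp add: range_inj_infinite)
    moreover have "range st \<subseteq> (\<Pi>\<^sub>E x \<in> D0 \<times> {..<K}. {..<chi})" using stin by blast
    ultimately show False using finst finite_subset by blast
  qed
  then obtain m1 m2 where mm: "m1 < m2" "st m1 = st m2"
    unfolding inj_def by (metis linorder_neqE_nat)
  define n1 :: int where "n1 = int (m1 * K)"
  define p :: int where "p = int ((m2 - m1) * K)"
  have pK: "p \<ge> int K" using mm(1) K1 by (simp add: p_def)
  have p0: "p > 0" using pK K1 by simp
  have stEq: "c (d \<otimes> a [^] (n1 + int j)) = c (d \<otimes> a [^] (n1 + p + int j))" if "d \<in> D0" "j < K" for d j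
  proof -
    have "st m1 (d, j) = st m2 (d, j)" using mm(2) by simp
    hence "c (d \<otimes> a [^] (int (m1 * K + j))) = c (d \<otimes> a [^] (int (m2 * K + j)))"
      using that by (simp add: st_def)
    moreover have "int (m1 * K + j) = n1 + int j" by (simp add: n1_def)
    moreover have "int (m2 * K + j) = n1 + p + int j"
    proof -
      have "m2 * K = m1 * K + (m2 - m1) * K" using mm(1) by (simp add: diff_mult_distrib)
      thus ?thesis by (simp add: n1_def p_def)
    qed
    ultimately show ?thesis by simp
  qed
  define phi where "phi t = n1 + (t - n1) mod p" for t
  define c' where "c' g = c (g \<otimes> a [^] (phi (L g) - L g))" for g
  have keep: "c' g = c g" if g: "g \<in> carrier G" and lo: "n1 \<le> L g" and hi: "L g < n1 + p + int K" for g
  proof (cases "L g < n1 + p")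
    case True
    hence "(L g - n1) mod p = L g - n1" using lo by (intro mod_pos_pos_trivial) simp_all
    hence "phi (L g) = L g" by (simp add: phi_def)
    thus ?thesis using g by (simp add: c'_def)
  next
    case False
    have "(L g - n1) mod p = ((L g - n1 - p) + p) mod p" by simp
    also have "\<dots> = (L g - n1 - p) mod p" by (rule mod_add_self2)
    also have "\<dots> = L g - n1 - p" using False hi pK by (intro mod_pos_pos_trivial) simp_all
    finally have "phi (L g) = L g - p" by (simp add: phi_def)
    hence c'g: "c' g = c (g \<otimes> a [^] (- p))" by (simp add: c'_def)
    define d where "d = red g"
    have d: "d \<in> D0" "d \<otimes> a [^] (L g) = g" using red[OF g] by (simp_all add: d_def)
    have dc: "d \<in> carrier G" using d(1) by simp
    define j where "j = nat (L g - n1 - p)"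
    have j: "j < K" "int j = L g - n1 - p" using False hi by (auto simp: j_def)
    have "g \<otimes> a [^] (- p) = d \<otimes> a [^] (n1 + int j)"
      using powmul[OF dc, of "L g" "- p"] d(2) j(2) by simp
    moreover have "g = d \<otimes> a [^] (n1 + p + int j)" using d(2) j(2) by simp
    ultimately show ?thesis using c'g stEq[OF d(1) j(1)] by simp
  qed
  have shiftc: "c' (g \<otimes> a [^] (p * q)) = c' g" if g: "g \<in> carrier G" for g q
  proof -
    have Lq: "L (g \<otimes> a [^] (p * q)) = L g + p * q" using L_pow[OF g] by simp
    have "phi (L g + p * q) = phi (L g)"
    proof -
      have "(L g + p * q - n1) mod p = (L g - n1 + p * q) mod p" by (simp add: algebra_simps)
      also have "\<dots> = (L g - n1) mod p" by simp
      finally show ?thesis by (simp add: phi_def)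
    qed
    hence "c' (g \<otimes> a [^] (p * q)) = c ((g \<otimes> a [^] (p * q)) \<otimes> a [^] (phi (L g) - (L g + p * q)))"
      by (simp add: c'_def Lq)
    also have "(g \<otimes> a [^] (p * q)) \<otimes> a [^] (phi (L g) - (L g + p * q)) = g \<otimes> a [^] (phi (L g) - L g)"
      using powmul[OF g] by simp
    finally show ?thesis by (simp add: c'_def)
  qed
  have reduce: "\<exists>g'. g' \<in> carrier G \<and> g = g' \<otimes> a [^] (p * q) \<and> L g' = L g - p * q" if g: "g \<in> carrier G" for g q
  proof -
    define g' where "g' = g \<otimes> a [^] (- (p * q))"
    have g'c: "g' \<in> carrier G" using g ac by (simp add: g'_def)
    moreover have "g' \<otimes> a [^] (p * q) = g" using powmul[OF g, of "- (p * q)" "p * q"] g by (simp add: g'_def)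
    moreover have "L g' = L g - p * q" using L_pow[OF g] by (simp add: g'_def)
    ultimately show ?thesis by metis
  qed
  have proper_aux: "c' g \<noteq> c' h" if e: "E g h" and le: "L g \<le> L h" for g h
  proof -
    have g: "g \<in> carrier G" and h: "h \<in> carrier G" using E_V[OF e] by auto
    define q where "q = (L g - n1) div p"
    obtain g' where g': "g' \<in> carrier G" "g = g' \<otimes> a [^] (p * q)" "L g' = L g - p * q" using reduce[OF g] by blast
    obtain h' where h': "h' \<in> carrier G" "h = h' \<otimes> a [^] (p * q)" "L h' = L h - p * q" using reduce[OF h] by blast
    have "E g' h'" using e g' h' E_right[of "a [^] (p * q)" g' h'] ac by simp
    have modeq: "L g - n1 - p * q = (L g - n1) mod p" unfolding q_def by (simp add: minus_div_mult_eq_mod[symmetric] mult.commute)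
    have m1: "0 \<le> (L g - n1) mod p" "(L g - n1) mod p < p" using p0 by simp_all
    have lo: "n1 \<le> L g'" using modeq g'(3) m1 by linarith
    have hi: "L g' < n1 + p" using modeq g'(3) m1 by linarith
    have lo': "n1 \<le> L h'" using lo le g'(3) h'(3) by simp
    have hi': "L h' < n1 + p + int K" using hi adjK(1)[OF e] g'(3) h'(3) by simp
    have "c' g = c' g'" using shiftc[OF g'(1)] g'(2) by simp
    also have "\<dots> = c g'" using keep[OF g'(1) lo] hi by simp
    also have "\<dots> \<noteq> c h'" using cp \<open>E g' h'\<close> g'(1) h'(1) unfolding proper_coloring_def by blast
    also have "c h' = c' h'" using keep[OF h'(1) lo' hi'] by simp
    also have "\<dots> = c' h" using shiftc[OF h'(1)] h'(2) by simp
    finally show ?thesis .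
  qed
  have proper: "proper_coloring (carrier G) E c'"
    unfolding proper_coloring_def
  proof (intro ballI impI)
    fix g h assume "g \<in> carrier G" "h \<in> carrier G" "E g h"
    show "c' g \<noteq> c' h"
    proof (cases "L g \<le> L h")
      case True thus ?thesis using proper_aux \<open>E g h\<close> by blast
    next
      case False
      hence "c' h \<noteq> c' g" using proper_aux E_sym[OF \<open>E g h\<close>] by simp
      thus ?thesis by simp
    qed
  qed
  have rng: "c' ` carrier G \<subseteq> {..<chi}"
  proof
    fix x assume "x \<in> c' ` carrier G"
    then obtain g where g: "g \<in> carrier G" "x = c' g" by blast
    have "g \<otimes> a [^] (phi (L g) - L g) \<in> carrier G" using g(1) ac by simp
    thus "x \<in> {..<chi}" using cr g(2) by (auto simp: c'_def)
  qed
  define Aut where "Aut = {\<sigma>. graph_aut (carrier G) E \<sigma> \<and> (\<forall>u\<in>carrier G. c' (\<sigma> u) = c' u)}"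
  define orb where "orb v = {\<sigma> v | \<sigma>. \<sigma> \<in> Aut}" for v
  have tauA: "(\<lambda>x. x \<otimes> a [^] (p * q)) \<in> Aut" for q
    unfolding Aut_def using right_aut[of "a [^] (p * q)"] ac shiftc by simp
  have compA: "\<sigma> \<circ> \<tau> \<in> Aut" if "\<sigma> \<in> Aut" "\<tau> \<in> Aut" for \<sigma> \<tau>
  proof -
    have "graph_aut (carrier G) E (\<sigma> \<circ> \<tau>)" using aut_comp that by (simp add: Aut_def)
    moreover have "\<tau> u \<in> carrier G" if "u \<in> carrier G" for u
      using \<open>\<tau> \<in> Aut\<close> that unfolding Aut_def graph_aut_def bij_betw_def by blast
    ultimately show ?thesis using that by (simp add: Aut_def)
  qed
  have orb_sub: "orb (\<tau> x) \<subseteq> orb x" if "\<tau> \<in> Aut" for \<tau> x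
  proof
    fix y assume "y \<in> orb (\<tau> x)"
    then obtain \<sigma> where "\<sigma> \<in> Aut" "y = \<sigma> (\<tau> x)" by (auto simp: orb_def)
    hence "y = (\<sigma> \<circ> \<tau>) x" "\<sigma> \<circ> \<tau> \<in> Aut" using compA that by auto
    thus "y \<in> orb x" unfolding orb_def by blast
  qed
  define R where "R = {g \<in> carrier G. 0 \<le> L g \<and> L g < p}"
  have finR: "finite R"
  proof -
    have "R \<subseteq> (\<lambda>(d, t). d \<otimes> a [^] t) ` (D0 \<times> {0..<p})"
    proof
      fix g assume "g \<in> R"
      hence g: "g \<in> carrier G" "0 \<le> L g" "L g < p" by (auto simp: R_def)
      have "(red g, L g) \<in> D0 \<times> {0..<p}" using red(1)[OF g(1)] g by simp
      moreover have "g = (\<lambda>(d, t). d \<otimes> a [^] t) (red g, L g)" using red(2)[OF g(1)] by simp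
      ultimately show "g \<in> (\<lambda>(d, t). d \<otimes> a [^] t) ` (D0 \<times> {0..<p})" by blast
    qed
    moreover have "finite ((\<lambda>(d, t). d \<otimes> a [^] t) ` (D0 \<times> {0..<p}))" using finD by simp
    ultimately show ?thesis by (rule finite_subset)
  qed
  have orbR: "orb v \<in> orb ` R" if v: "v \<in> carrier G" for v
  proof -
    define q where "q = L v div p"
    obtain w where w: "w \<in> carrier G" "v = w \<otimes> a [^] (p * q)" "L w = L v - p * q" using reduce[OF v] by blast
    have "L w = L v mod p" using w(3) unfolding q_def by (simp add: minus_div_mult_eq_mod[symmetric] mult.commute)
    hence wR: "w \<in> R" using w(1) p0 by (simp add: R_def)
    have "w = v \<otimes> a [^] (p * (- q))"
      using powmul[OF w(1), of "p * q" "p * (- q)"] w(1,2) by simp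
    have "orb v \<subseteq> orb w" using orb_sub[OF tauA[of q], of w] w(2) by simp
    moreover have "orb w \<subseteq> orb v" using orb_sub[OF tauA[of "- q"], of v] \<open>w = v \<otimes> a [^] (p * (- q))\<close> by simp
    ultimately have "orb v = orb w" by blast
    thus ?thesis using wR by blast
  qed
  have "{{\<sigma> v | \<sigma>. graph_aut (carrier G) E \<sigma> \<and> (\<forall>u\<in>carrier G. c' (\<sigma> u) = c' u)} | v. v \<in> carrier G} = orb ` carrier G"
    unfolding orb_def Aut_def by blast
  also have "\<dots> \<subseteq> orb ` R" using orbR by blast
  finally have "periodic_coloring (carrier G) E c'"
    unfolding periodic_coloring_def using finR finite_subset by blast
  thus ?thesis using proper rng by blast
qed

end


theorem theorem5p2:
  fixes G :: "('a, 'b) monoid_scheme" and S :: "'a set"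
  assumes "group G" and "finitely_generated G" and "group_num_ends G 2"
    and "finite_gen_set G S" and "\<one>\<^bsub>G\<^esub> \<notin> S"
  shows "\<exists>c :: 'a \<Rightarrow> nat.
           proper_coloring (carrier G) (cayley_adj G S) c \<and>
           c ` carrier G \<subseteq> {..<chromatic_number (carrier G) (cayley_adj G S)} \<and>
           periodic_coloring (carrier G) (cayley_adj G S) c"
proof -
  obtain S0 where S0: "finite_gen_set G S0" "has_num_ends (carrier G) (cayley_adj G S0) 2"
    using assms(3) unfolding group_num_ends_def by blast
  interpret C: cay G S0
    using S0(1) unfolding finite_gen_set_def by (intro cay.intro[OF assms(1)] cay_axioms.intro) auto
  obtain a and L :: "'a \<Rightarrow> int" where aL: "a \<in> carrier G" "\<forall>g\<in>carrier G. L (g \<otimes>\<^bsub>G\<^esub> a) = L g + 1"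
    "finite {g\<in>carrier G. L g = 0}"
    using C.virt[OF S0(2)] by blast
  interpret R: colr G S a L
    using assms(4,5) aL unfolding finite_gen_set_def by (intro colr.intro[OF assms(1)] colr_axioms.intro) auto
  from R.periodic_exists show ?thesis .
qed


end
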